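(* Let $\mathbb K\in\{\mathbb R,\mathbb C\}$ and $1\le p<\infty$. Then $$\exp\left\{\int_{S_{\ell_2^d(\mathbb K)}}\log\left(\frac1{\|z\|_p}\right)dS(z)\right\}\asymp d^{\frac12-\frac1p},$$ and for $p=\infty$, $$\left(\frac d{\log d}\right)^{1/2}\prec \exp\left\{\int_{S_{\ell_2^d(\mathbb K)}}\log\left(\frac1{\|z\|_\infty}\right)dS(z)\right\}\prec d^{1/2}.$$
   Context: $dS$ denotes the normalized surface (Lebesgue) measure on the unit sphere $S_{\ell_2^d(\mathbb K)}$ of $\mathbb K^d$ with the Euclidean norm; $\|z\|_p$ is the $\ell_p$ norm on $\mathbb K^d$. For positive sequences indexed by $d$, $a_d\prec b_d$ means there is a constant $L>0$ independent of $d$ (possibly depending on $p$ and $\mathbb K$) with $a_d\le Lb_d$; $a_d\asymp b_d$ means $a_d\prec b_d$ and $b_d\prec a_d$. *)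

theory Defs
  imports "HOL-Analysis.Analysis"
begin

text \<open>The space K^d is modelled as extensional functions on the index set {..<d}
  with values in K (K = real or complex), carrying the product Lebesgue measure
  (for K = complex, lborel on complex is Lebesgue measure on R^2, so this is
  Lebesgue measure on R^(2d)).\<close>

definition Kd_measure :: "'a itself \<Rightarrow> nat \<Rightarrow> (nat \<Rightarrow> 'a::euclidean_space) measure" where
  "Kd_measure _ d = PiM {..<d} (\<lambda>_. lborel)"

definition l2norm :: "nat \<Rightarrow> (nat \<Rightarrow> 'a::real_normed_vector) \<Rightarrow> real" where
  "l2norm d z = sqrt (\<Sum>i<d. (norm (z i))\<^sup>2)"

definition pnorm :: "nat \<Rightarrow> real \<Rightarrow> (nat \<Rightarrow> 'a::real_normed_vector) \<Rightarrow> real" where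
  "pnorm d p z = (\<Sum>i<d. norm (z i) powr p) powr (1 / p)"

definition infnorm_d :: "nat \<Rightarrow> (nat \<Rightarrow> 'a::real_normed_vector) \<Rightarrow> real" where
  "infnorm_d d z = Max (insert 0 ((\<lambda>i. norm (z i)) ` {..<d}))"

definition unit_ball_d :: "'a itself \<Rightarrow> nat \<Rightarrow> (nat \<Rightarrow> 'a::euclidean_space) set" where
  "unit_ball_d K d = {x \<in> space (Kd_measure K d). l2norm d x \<le> 1}"

text \<open>Integral against the normalized surface measure dS on the unit sphere of
  l_2^d(K), realised as the (normalized) cone measure:
  \<integral>_S f dS = (1 / vol(B)) \<integral>_B f(x/|x|_2) dx.\<close>

definition sphere_integral ::
  "'a itself \<Rightarrow> nat \<Rightarrow> ((nat \<Rightarrow> 'a::euclidean_space) \<Rightarrow> real) \<Rightarrow> real" where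
  "sphere_integral K d f =
     (\<integral>x. indicator (unit_ball_d K d) x *
            f (restrict (\<lambda>i. x i /\<^sub>R l2norm d x) {..<d}) \<partial>Kd_measure K d)
     / measure (Kd_measure K d) (unit_ball_d K d)"

end

theory Submission
  imports Defs
begin

lemma emeasure_lborel_scale_vimage:
  fixes A :: "'a::euclidean_space set"
  assumes c: "c > 0" and A: "A \<in> sets borel"
  shows "emeasure lborel A = ennreal (c ^ DIM('a)) * emeasure lborel ((\<lambda>y. c *\<^sub>R y) -` A)"
proof -
  have "emeasure lborel A = emeasure (density (distr lborel borel (\<lambda>x. 0 + c *\<^sub>R x)) (\<lambda>_. \<bar>c\<bar>^DIM('a))) A"
    using lborel_affine[of c "0::'a"] c by simp
  also have "\<dots> = ennreal (c ^ DIM('a)) * emeasure lborel ((\<lambda>y. c *\<^sub>R y) -` A)"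
    using A c by (simp add: emeasure_density emeasure_distr nn_integral_cmult_indicator)
  finally show ?thesis .
qed

lemma PiM_scale:
  fixes I :: "nat set"
  assumes I: "finite I" and c: "c > 0"
  defines "T \<equiv> (\<lambda>x::nat \<Rightarrow> 'a::euclidean_space. restrict (\<lambda>j. c *\<^sub>R x j) I)"
  shows "PiM I (\<lambda>_. lborel::'a measure) =
     density (distr (PiM I (\<lambda>_. lborel)) (PiM I (\<lambda>_. lborel)) T) (\<lambda>_. ennreal (c ^ (DIM('a) * card I)))"
proof -
  interpret product_sigma_finite "\<lambda>_. lborel::'a measure" by standard
  have Tm[measurable]: "T \<in> PiM I (\<lambda>_. lborel) \<rightarrow>\<^sub>M PiM I (\<lambda>_. lborel)"
    unfolding T_def by (intro measurable_restrict) auto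
  show ?thesis
  proof (rule PiM_eqI[symmetric])
    show "finite I" by fact
    show "sets (density (distr (PiM I (\<lambda>_. lborel)) (PiM I (\<lambda>_. lborel)) T) (\<lambda>_. ennreal (c ^ (DIM('a) * card I)))) = sets (PiM I (\<lambda>_. lborel))"
      by simp
  next
    fix A assume A: "\<And>i. i \<in> I \<Longrightarrow> A i \<in> sets (lborel::'a measure)"
    have PE: "Pi\<^sub>E I A \<in> sets (PiM I (\<lambda>_. lborel))" using A by (intro sets_PiM_I_finite) (auto simp: I)
    have vim: "T -` Pi\<^sub>E I A \<inter> space (PiM I (\<lambda>_. lborel)) = Pi\<^sub>E I (\<lambda>i. (\<lambda>y. c *\<^sub>R y) -` A i)"
      by (auto simp: T_def space_PiM PiE_def Pi_def extensional_def)
    have Av: "\<And>i. i \<in> I \<Longrightarrow> (\<lambda>y. c *\<^sub>R y) -` A i \<in> sets (lborel::'a measure)"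
    proof -
      fix i assume "i \<in> I"
      have "(\<lambda>y::'a. c *\<^sub>R y) -` A i = (\<lambda>y::'a. c *\<^sub>R y) -` A i \<inter> space lborel" by simp
      also have "\<dots> \<in> sets lborel" using A[OF \<open>i \<in> I\<close>] by (intro measurable_sets[where A=lborel]) auto
      finally show "(\<lambda>y. c *\<^sub>R y) -` A i \<in> sets (lborel::'a measure)" .
    qed
    have "emeasure (density (distr (PiM I (\<lambda>_. lborel)) (PiM I (\<lambda>_. lborel)) T) (\<lambda>_. ennreal (c ^ (DIM('a) * card I)))) (Pi\<^sub>E I A)
       = ennreal (c ^ (DIM('a) * card I)) * emeasure (PiM I (\<lambda>_. lborel)) (Pi\<^sub>E I (\<lambda>i. (\<lambda>y. c *\<^sub>R y) -` A i))"
      using PE by (simp add: emeasure_density emeasure_distr nn_integral_cmult_indicator vim[symmetric])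
    also have "\<dots> = ennreal (c ^ (DIM('a) * card I)) * (\<Prod>i\<in>I. emeasure lborel ((\<lambda>y. c *\<^sub>R y) -` A i))"
      using Av by (simp add: emeasure_PiM I)
    also have "\<dots> = (\<Prod>i\<in>I. ennreal (c ^ DIM('a)) * emeasure lborel ((\<lambda>y. c *\<^sub>R y) -` A i))"
      using c by (simp add: prod.distrib power_mult ennreal_power[symmetric] prod_constant)
    also have "\<dots> = (\<Prod>i\<in>I. emeasure lborel (A i))"
      using A c by (intro prod.cong refl emeasure_lborel_scale_vimage[symmetric]) auto
    finally show "emeasure (density (distr (PiM I (\<lambda>_. lborel)) (PiM I (\<lambda>_. lborel)) T) (\<lambda>_. ennreal (c ^ (DIM('a) * card I)))) (Pi\<^sub>E I A) = (\<Prod>i\<in>I. emeasure lborel (A i))" .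
  qed
qed

lemma nn_integral_PiM_scale:
  fixes I :: "nat set" and f :: "(nat \<Rightarrow> 'a::euclidean_space) \<Rightarrow> ennreal"
  assumes I: "finite I" and c: "c > 0" and f[measurable]: "f \<in> borel_measurable (PiM I (\<lambda>_. lborel))"
  shows "(\<integral>\<^sup>+x. f x \<partial>PiM I (\<lambda>_. lborel)) =
     ennreal (c ^ (DIM('a) * card I)) * (\<integral>\<^sup>+x. f (restrict (\<lambda>j. c *\<^sub>R x j) I) \<partial>PiM I (\<lambda>_. lborel))"
proof -
  have Tm[measurable]: "(\<lambda>x::nat \<Rightarrow> 'a. restrict (\<lambda>j. c *\<^sub>R x j) I) \<in> PiM I (\<lambda>_. lborel) \<rightarrow>\<^sub>M PiM I (\<lambda>_. lborel)"
    by (intro measurable_restrict) auto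
  show ?thesis
    by (subst PiM_scale[OF I c]) (simp add: nn_integral_density nn_integral_distr nn_integral_cmult)
qed

definition nsq :: "nat set \<Rightarrow> (nat \<Rightarrow> 'a::real_normed_vector) \<Rightarrow> real" where
  "nsq I x = (\<Sum>j\<in>I. (norm (x j))\<^sup>2)"

definition BS :: "nat set \<Rightarrow> real \<Rightarrow> (nat \<Rightarrow> 'a::euclidean_space) set" where
  "BS I r = {x \<in> space (PiM I (\<lambda>_. lborel::'a measure)). nsq I x \<le> r}"

lemma nsq_nonneg: "nsq I x \<ge> 0"
  unfolding nsq_def by (intro sum_nonneg) auto

lemma nsq_measurable[measurable]:
  "finite I \<Longrightarrow> nsq I \<in> borel_measurable (PiM I (\<lambda>_. lborel::'a::euclidean_space measure))"
  unfolding nsq_def[abs_def] by measurable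

lemma BS_sets[measurable]:
  "finite I \<Longrightarrow> BS I r \<in> sets (PiM I (\<lambda>_. lborel::'a::euclidean_space measure))"
  unfolding BS_def by measurable

lemma BS_scale:
  assumes I: "finite I" and r: "r > 0"
  shows "emeasure (PiM I (\<lambda>_. lborel)) (BS I r :: (nat \<Rightarrow> 'a::euclidean_space) set) =
     ennreal (sqrt r ^ (DIM('a) * card I)) * emeasure (PiM I (\<lambda>_. lborel)) (BS I 1 :: (nat \<Rightarrow> 'a) set)"
proof -
  let ?M = "PiM I (\<lambda>_. lborel::'a measure)"
  have "emeasure ?M (BS I r) = (\<integral>\<^sup>+x. indicator (BS I r) x \<partial>?M)"
    using I by simp
  also have "\<dots> = ennreal (sqrt r ^ (DIM('a) * card I)) *
      (\<integral>\<^sup>+x. indicator (BS I r) (restrict (\<lambda>j. sqrt r *\<^sub>R x j) I) \<partial>?M)"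
    using I r by (intro nn_integral_PiM_scale) auto
  also have "(\<integral>\<^sup>+x. indicator (BS I r) (restrict (\<lambda>j. sqrt r *\<^sub>R x j) I) \<partial>?M)
      = (\<integral>\<^sup>+x. indicator (BS I 1) x \<partial>?M)"
  proof (intro nn_integral_cong)
    fix x assume x: "x \<in> space ?M"
    have "nsq I (restrict (\<lambda>j. sqrt r *\<^sub>R x j) I) = r * nsq I x"
      using r by (simp add: nsq_def sum_distrib_left power_mult_distrib)
    moreover have "restrict (\<lambda>j. sqrt r *\<^sub>R x j) I \<in> space ?M"
      by (simp add: space_PiM)
    ultimately show "indicator (BS I r) (restrict (\<lambda>j. sqrt r *\<^sub>R x j) I) = (indicator (BS I 1) x :: ennreal)"
      using x r by (simp add: BS_def indicator_def)
  qed
  also have "(\<integral>\<^sup>+x. indicator (BS I 1) x \<partial>?M) = emeasure ?M (BS I 1)"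
    using I by simp
  finally show ?thesis .
qed

lemma BS_fin:
  assumes I: "finite I"
  shows "emeasure (PiM I (\<lambda>_. lborel)) (BS I r :: (nat \<Rightarrow> 'a::euclidean_space) set) < \<infinity>"
proof -
  interpret product_sigma_finite "\<lambda>_. lborel::'a measure" by standard
  have sub: "BS I r \<subseteq> Pi\<^sub>E I (\<lambda>_. cball (0::'a) (sqrt (max 0 r)))"
  proof
    fix x :: "nat \<Rightarrow> 'a" assume x: "x \<in> BS I r"
    then have xs: "x \<in> space (PiM I (\<lambda>_. lborel::'a measure))" and le: "nsq I x \<le> r"
      by (auto simp: BS_def)
    have "norm (x j) \<le> sqrt (max 0 r)" if j: "j \<in> I" for j
    proof -
      have "(norm (x j))\<^sup>2 \<le> nsq I x"
        unfolding nsq_def using I j by (intro member_le_sum) auto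
      then have "(norm (x j))\<^sup>2 \<le> max 0 r" using le by simp
      then show ?thesis by (simp add: real_le_rsqrt)
    qed
    then show "x \<in> Pi\<^sub>E I (\<lambda>_. cball (0::'a) (sqrt (max 0 r)))"
      using xs by (auto simp: space_PiM PiE_def)
  qed
  have "emeasure (PiM I (\<lambda>_. lborel)) (BS I r :: (nat \<Rightarrow> 'a) set) \<le> emeasure (PiM I (\<lambda>_. lborel)) (Pi\<^sub>E I (\<lambda>_. cball (0::'a) (sqrt (max 0 r))))"
    apply (rule Measure_Space.emeasure_mono[OF sub])
    apply (rule sets_PiM_I_finite)
    using I by auto
  also have "\<dots> = (\<Prod>i\<in>I. emeasure lborel (cball (0::'a) (sqrt (max 0 r))))"
    using I by (simp add: emeasure_PiM)
  also have "\<dots> < \<infinity>"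
    using emeasure_lborel_cball_finite[of "0::'a" "sqrt (max 0 r)"] by (simp add: power_less_top_ennreal)
  finally show ?thesis .
qed

lemma BS_pos:
  assumes I: "finite I" "I \<noteq> {}"
  shows "emeasure (PiM I (\<lambda>_. lborel)) (BS I 1 :: (nat \<Rightarrow> 'a::euclidean_space) set) > 0"
proof -
  interpret product_sigma_finite "\<lambda>_. lborel::'a measure" by standard
  define \<rho> where "\<rho> = 1 / sqrt (card I)"
  have cI: "card I > 0" using I by auto
  have \<rho>: "\<rho> > 0" using cI by (simp add: \<rho>_def)
  have sub: "Pi\<^sub>E I (\<lambda>_. ball (0::'a) \<rho>) \<subseteq> BS I 1"
  proof
    fix x assume x: "x \<in> Pi\<^sub>E I (\<lambda>_. ball (0::'a) \<rho>)"
    have "nsq I x \<le> (\<Sum>j\<in>I. \<rho>\<^sup>2)"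
      unfolding nsq_def using x by (intro sum_mono power_mono) (auto simp: PiE_def Pi_iff less_imp_le)
    also have "\<dots> = 1" using cI by (simp add: \<rho>_def power_divide)
    finally show "x \<in> BS I 1" using x by (auto simp: BS_def space_PiM PiE_def)
  qed
  have "0 < (\<Prod>i\<in>I. emeasure lborel (ball (0::'a) \<rho>))"
    using \<rho> by (simp add: emeasure_ball ennreal_power)
  also have "\<dots> = emeasure (PiM I (\<lambda>_. lborel)) (Pi\<^sub>E I (\<lambda>_. ball (0::'a) \<rho>))"
    using I by (simp add: emeasure_PiM)
  also have "\<dots> \<le> emeasure (PiM I (\<lambda>_. lborel)) (BS I 1 :: (nat \<Rightarrow> 'a) set)"
    using sub I by (intro Measure_Space.emeasure_mono) auto
  finally show ?thesis .
qed

lemma BS_zero: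
  assumes I: "finite I" "I \<noteq> {}"
  shows "emeasure (PiM I (\<lambda>_. lborel)) (BS I 0 :: (nat \<Rightarrow> 'a::euclidean_space) set) = 0"
proof -
  interpret product_sigma_finite "\<lambda>_. lborel::'a measure" by standard
  have eq: "BS I 0 = Pi\<^sub>E I (\<lambda>_. {0::'a})"
  proof (intro set_eqI iffI)
    fix x :: "nat \<Rightarrow> 'a" assume x: "x \<in> BS I (0::real)"
    then have xs: "x \<in> space (PiM I (\<lambda>_. lborel::'a measure))" and le: "nsq I x \<le> 0"
      by (auto simp: BS_def)
    have "nsq I x = 0" using le nsq_nonneg[of I x] by simp
    then have "\<forall>j\<in>I. (norm (x j))\<^sup>2 = 0" unfolding nsq_def using I
      by (subst sum_nonneg_eq_0_iff[symmetric]) auto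
    then show "x \<in> Pi\<^sub>E I (\<lambda>_. {0::'a})" using xs by (auto simp: space_PiM PiE_iff extensional_def fun_eq_iff)
  next
    fix x assume x: "x \<in> Pi\<^sub>E I (\<lambda>_. {0::'a})"
    then have "nsq I x = 0" by (auto simp: nsq_def PiE_def)
    then show "x \<in> BS I 0" using x by (auto simp: BS_def space_PiM PiE_def)
  qed
  obtain i where i: "i \<in> I" using I by auto
  have "emeasure (PiM I (\<lambda>_. lborel)) (Pi\<^sub>E I (\<lambda>_. {0::'a})) = (\<Prod>i\<in>I. emeasure lborel {0::'a})"
    using I by (intro emeasure_PiM) auto
  also have "\<dots> = 0" using I i by (simp add: card_gt_0_iff)
  finally show ?thesis by (simp add: eq)
qed

lemma BS_neg:
  assumes "r < 0" shows "BS I r = {}"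
proof -
  have "\<not> nsq I x \<le> r" for x :: "nat \<Rightarrow> 'a::euclidean_space" using nsq_nonneg[of I x] assms by linarith
  then show ?thesis by (auto simp: BS_def)
qed

lemma BS_measure:
  assumes I: "finite I" "I \<noteq> {}"
  shows "emeasure (PiM I (\<lambda>_. lborel)) (BS I s :: (nat \<Rightarrow> 'a::euclidean_space) set) =
     ennreal (max 0 s powr (DIM('a) * card I / 2)) * emeasure (PiM I (\<lambda>_. lborel)) (BS I 1 :: (nat \<Rightarrow> 'a) set)"
proof -
  consider "s > 0" | "s = 0" | "s < 0" by linarith
  then show ?thesis
  proof cases
    case 1
    have "sqrt s ^ (DIM('a) * card I) = s powr (DIM('a) * card I / 2)"
      using 1 by (simp add: sqrt_def root_powr_inverse powr_realpow[symmetric] powr_powr)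
    then show ?thesis using BS_scale[OF I(1) 1, where 'a='a] 1 by simp
  next
    case 2
    then show ?thesis using BS_zero[OF I] by simp
  next
    case 3
    then show ?thesis by (simp add: BS_neg)
  qed
qed

lemma fubini_ball:
  fixes h :: "'a::euclidean_space \<Rightarrow> ennreal"
  assumes J: "finite J" "i \<notin> J" and h[measurable]: "h \<in> borel_measurable borel"
  shows "(\<integral>\<^sup>+ x. h (x i) * indicator (BS (insert i J) 1) x \<partial>PiM (insert i J) (\<lambda>_. lborel::'a measure))
       = (\<integral>\<^sup>+ y. h y * emeasure (PiM J (\<lambda>_. lborel::'a measure)) (BS J (1 - (norm y)\<^sup>2)) \<partial>lborel)"
proof -
  interpret product_sigma_finite "\<lambda>_. lborel::'a measure" by standard
  have fi: "finite (insert i J)" using J by simp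
  have meas: "(\<lambda>x. h (x i) * indicator (BS (insert i J) 1) x) \<in> borel_measurable (PiM (insert i J) (\<lambda>_. lborel::'a measure))"
    using fi by measurable
  have "(\<integral>\<^sup>+ x. h (x i) * indicator (BS (insert i J) 1) x \<partial>PiM (insert i J) (\<lambda>_. lborel::'a measure))
      = (\<integral>\<^sup>+ y. (\<integral>\<^sup>+ x. h ((x(i := y)) i) * indicator (BS (insert i J) 1) (x(i := y)) \<partial>PiM J (\<lambda>_. lborel::'a measure)) \<partial>lborel)"
    using J meas by (subst product_nn_integral_insert_rev) auto
  also have "\<dots> = (\<integral>\<^sup>+ y. (\<integral>\<^sup>+ x. h y * indicator (BS J (1 - (norm y)\<^sup>2)) x \<partial>PiM J (\<lambda>_. lborel::'a measure)) \<partial>lborel)"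
  proof -
    have inner: "h ((x(i := y)) i) * indicator (BS (insert i J) 1) (x(i := y)) = h y * indicator (BS J (1 - (norm y)\<^sup>2)) x"
      if x: "x \<in> space (PiM J (\<lambda>_. lborel::'a measure))" for y :: 'a and x :: "nat \<Rightarrow> 'a"
    proof -
      have xs: "x(i := y) \<in> space (PiM (insert i J) (\<lambda>_. lborel::'a measure))"
        using x J by (auto simp: space_PiM PiE_iff extensional_def)
      have "nsq (insert i J) (x(i := y)) = (norm y)\<^sup>2 + nsq J x"
        using J unfolding nsq_def by (simp add: sum.insert, intro sum.cong, auto)
      then have "indicator (BS (insert i J) 1) (x(i := y)) = (indicator (BS J (1 - (norm y)\<^sup>2)) x :: ennreal)"
        using xs x by (auto simp: BS_def indicator_def)
      then show ?thesis by simp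
    qed
    show ?thesis
      apply (intro nn_integral_cong)
      apply (rule inner)
      apply assumption
      done
  qed
  also have "\<dots> = (\<integral>\<^sup>+ y. h y * emeasure (PiM J (\<lambda>_. lborel::'a measure)) (BS J (1 - (norm y)\<^sup>2)) \<partial>lborel)"
    using J by (intro nn_integral_cong nn_integral_cmult_indicator) auto
  finally show ?thesis .
qed

lemma lborel_scale_nn:
  fixes f :: "'a::euclidean_space \<Rightarrow> ennreal"
  assumes c: "c > 0" and f[measurable]: "f \<in> borel_measurable borel"
  shows "(\<integral>\<^sup>+ y. f y \<partial>lborel) = ennreal (c ^ DIM('a)) * (\<integral>\<^sup>+ y. f (c *\<^sub>R y) \<partial>lborel)"
proof -
  have "(\<integral>\<^sup>+ y. f y \<partial>lborel) = (\<integral>\<^sup>+ y. f y \<partial>density (distr lborel borel (\<lambda>x. 0 + c *\<^sub>R x)) (\<lambda>_. \<bar>c\<bar>^DIM('a)))"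
    using lborel_affine[of c "0::'a"] c by simp
  also have "\<dots> = ennreal (c ^ DIM('a)) * (\<integral>\<^sup>+ y. f (c *\<^sub>R y) \<partial>lborel)"
    using c by (simp add: nn_integral_density nn_integral_distr nn_integral_cmult)
  finally show ?thesis .
qed

lemma pos_pt:
  fixes s b :: real
  assumes b: "b \<ge> 0" and s: "s \<ge> 0"
  shows "max 0 (1 - s) powr b \<le> max 0 (1 - s/2) powr (2 * b)"
proof (cases "s \<ge> 1")
  case True then show ?thesis by simp
next
  case False
  have "max 0 (1 - s) powr b = (1 - s) powr b" using False by simp
  also have "\<dots> \<le> ((1 - s/2)\<^sup>2) powr b"
    using False s b by (intro powr_mono2) (auto simp: power2_eq_square algebra_simps)
  also have "\<dots> = (1 - s/2) powr (2 * b)"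
    using False s by (simp add: powr_powr[symmetric] powr_numeral)
  also have "\<dots> = max 0 (1 - s/2) powr (2 * b)" using False s by simp
  finally show ?thesis .
qed

lemma D_compare:
  assumes b: "b \<ge> 0"
  shows "(\<integral>\<^sup>+ y. ennreal (max 0 (1 - (norm y)\<^sup>2) powr b) \<partial>(lborel::'a::euclidean_space measure))
     \<le> ennreal (sqrt 2 ^ DIM('a)) * (\<integral>\<^sup>+ y. ennreal (max 0 (1 - (norm y)\<^sup>2) powr (2 * b)) \<partial>(lborel::'a measure))"
proof -
  have "(\<integral>\<^sup>+ y. ennreal (max 0 (1 - (norm y)\<^sup>2) powr (2 * b)) \<partial>(lborel::'a measure))
     = ennreal ((1 / sqrt 2) ^ DIM('a)) * (\<integral>\<^sup>+ y. ennreal (max 0 (1 - (norm ((1 / sqrt 2) *\<^sub>R y))\<^sup>2) powr (2 * b)) \<partial>(lborel::'a measure))"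
    by (subst lborel_scale_nn[of "1 / sqrt 2"]) auto
  also have "(\<lambda>y::'a. ennreal (max 0 (1 - (norm ((1 / sqrt 2) *\<^sub>R y))\<^sup>2) powr (2 * b)))
      = (\<lambda>y. ennreal (max 0 (1 - (norm y)\<^sup>2 / 2) powr (2 * b)))"
    by (simp add: power_mult_distrib power_divide)
  finally have eq: "ennreal (sqrt 2 ^ DIM('a)) * (\<integral>\<^sup>+ y. ennreal (max 0 (1 - (norm y)\<^sup>2) powr (2 * b)) \<partial>(lborel::'a measure))
      = (\<integral>\<^sup>+ y. ennreal (max 0 (1 - (norm y)\<^sup>2 / 2) powr (2 * b)) \<partial>(lborel::'a measure))"
    by (simp add: mult.assoc[symmetric] ennreal_mult'[symmetric] power_mult_distrib[symmetric])
  have "(\<integral>\<^sup>+ y. ennreal (max 0 (1 - (norm y)\<^sup>2) powr b) \<partial>(lborel::'a measure))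
      \<le> (\<integral>\<^sup>+ y. ennreal (max 0 (1 - (norm y)\<^sup>2 / 2) powr (2 * b)) \<partial>(lborel::'a measure))"
    using b by (intro nn_integral_mono ennreal_leI pos_pt) auto
  then show ?thesis using eq by simp
qed

lemma key_pt:
  fixes s a b :: real
  assumes s: "0 < s" "s < 1" and a: "a > 0" and b: "b > 0"
  shows "s powr a * (1 - s) powr b \<le> (a / b) powr a"
proof -
  have l1: "ln (1 - s) \<le> - s" using ln_le_minus_one[of "1 - s"] s by simp
  have l2: "ln (s * b / a) \<le> s * b / a - 1" using s a b by (intro ln_le_minus_one) auto
  have "ln (s powr a * (1 - s) powr b) = a * ln s + b * ln (1 - s)"
    using s by (simp add: ln_mult ln_powr)
  also have "\<dots> \<le> a * ln s - b * s" using mult_left_mono[OF l1, of b] b by simp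
  also have "\<dots> \<le> a * ln (a / b)"
  proof -
    have "ln (s * b / a) = ln s + ln b - ln a" using s a b by (simp add: ln_div ln_mult)
    moreover have "ln (a / b) = ln a - ln b" using a b by (simp add: ln_div)
    moreover have "a * ln (s * b / a) \<le> a * (s * b / a - 1)" using l2 a by (intro mult_left_mono) auto
    moreover have "a * (s * b / a - 1) = s * b - a" using a by (simp add: field_simps)
    ultimately have "a * (ln s + ln b - ln a) \<le> s * b - a" by simp
    then have "a * ln s \<le> s * b - a + a * (ln a - ln b)" by (simp add: algebra_simps)
    moreover have "a * ln (a / b) = a * ln a - a * ln b" using \<open>ln (a / b) = ln a - ln b\<close> by (simp add: right_diff_distrib)
    ultimately have "a * ln s - b * s \<le> a * ln a - a * ln b - a" and eqq: "a * ln (a / b) = a * ln a - a * ln b"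
      by (simp_all add: algebra_simps)
    then show ?thesis using a by linarith
  qed
  also have "\<dots> = ln ((a / b) powr a)" using a b by (simp add: ln_powr)
  finally show ?thesis using s a b by (subst (asm) ln_le_cancel_iff) auto
qed

lemma num_pt:
  fixes y :: "'a::real_normed_vector" and q m :: real
  assumes q: "q > 0" and m: "m > 0"
  shows "norm y powr q * max 0 (1 - (norm y)\<^sup>2) powr (m / 2)
     \<le> (2 * q / m) powr (q / 2) * max 0 (1 - (norm y)\<^sup>2) powr (m / 4)"
proof -
  define s where "s = (norm y)\<^sup>2"
  have ns0: "norm y powr q = (norm y powr 2) powr (q / 2)"
    by (simp only: powr_powr) simp
  have "norm y powr 2 = s" by (simp add: s_def powr_numeral)
  with ns0 have ns: "norm y powr q = s powr (q / 2)" by simp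
  consider "s = 0" | "s \<ge> 1" | "0 < s" "s < 1" using s_def by force
  then show ?thesis
  proof cases
    case 1 then show ?thesis using q m by (simp add: ns s_def[symmetric])
  next
    case 2 then show ?thesis using q m by (simp add: s_def[symmetric])
  next
    case 3
    have e: "(1 - s) powr (m / 2) = (1 - s) powr (m / 4) * (1 - s) powr (m / 4)"
      by (simp add: powr_add[symmetric])
    have "s powr (q / 2) * (1 - s) powr (m / 4) \<le> ((q / 2) / (m / 4)) powr (q / 2)"
      using 3 q m by (intro key_pt) auto
    also have "(q / 2) / (m / 4) = 2 * q / m" by (simp add: field_simps)
    finally have k: "s powr (q / 2) * (1 - s) powr (m / 4) \<le> (2 * q / m) powr (q / 2)" .
    have "norm y powr q * max 0 (1 - (norm y)\<^sup>2) powr (m / 2) = (s powr (q / 2) * (1 - s) powr (m / 4)) * (1 - s) powr (m / 4)"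
      using 3 by (simp add: ns s_def[symmetric] e)
    also have "\<dots> \<le> (2 * q / m) powr (q / 2) * (1 - s) powr (m / 4)"
      using k by (intro mult_right_mono) auto
    also have "\<dots> = (2 * q / m) powr (q / 2) * max 0 (1 - (norm y)\<^sup>2) powr (m / 4)"
      using 3 by (simp add: s_def[symmetric])
    finally show ?thesis .
  qed
qed

lemma moment_const:
  fixes q m k d :: real
  assumes q: "q > 0" and d: "d \<ge> 2" and k: "k \<ge> 1" and m: "m \<ge> d / 2"
  shows "2 powr q * ((2 * q / m) powr (q / 2) * sqrt 2 ^ n) + (1/4) powr (k * d / 2)
     \<le> (sqrt 2 ^ n + 1) * (16 * q / d) powr (q / 2)"
proof -
  have mpos: "m > 0" using m d by simp
  have a: "2 powr q * (2 * q / m) powr (q / 2) \<le> (16 * q / d) powr (q / 2)"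
  proof -
    have "2 powr q = 4 powr (q / 2)"
      by (simp add: powr_powr[symmetric] powr_numeral[symmetric] del: powr_numeral)
    moreover have "(4 * (2 * q / m)) powr (q / 2) = 4 powr (q / 2) * (2 * q / m) powr (q / 2)"
      by (rule powr_mult)
    ultimately have "2 powr q * (2 * q / m) powr (q / 2) = (4 * (2 * q / m)) powr (q / 2)"
      by simp
    also have "\<dots> \<le> (16 * q / d) powr (q / 2)"
    proof (intro powr_mono2)
      show "4 * (2 * q / m) \<le> 16 * q / d"
        using q mpos d m by (simp add: field_simps)
    qed (use q mpos in auto)
    finally show ?thesis .
  qed
  have b: "(1/4) powr (k * d / 2) \<le> (16 * q / d) powr (q / 2)"
  proof -
    have l2: "ln (2::real) \<ge> 2/3" by (rule ln2_ge_two_thirds)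
    have l4: "ln (4::real) = 2 * ln 2"
      using ln_realpow[of 2 2] by simp
    have "ln ((1/4) powr (k * d / 2)) = - (k * d / 2) * ln 4"
      by (simp add: ln_powr ln_div)
    also have "\<dots> \<le> - d / 2"
    proof -
      have "d / 2 \<le> (k * d / 2) * 1" using k d by simp
      also have "\<dots> \<le> (k * d / 2) * ln 4" using l2 l4 k d by (intro mult_left_mono) auto
      finally show ?thesis by simp
    qed
    also have "\<dots> \<le> (q / 2) * ln (16 * q / d)"
    proof -
      have x: "16 * q / d > 0" using q d by simp
      have "ln (1 / (16 * q / d)) \<le> 1 / (16 * q / d) - 1" using q d by (intro ln_le_minus_one) auto
      then have "1 - d / (16 * q) \<le> ln (16 * q / d)" using x q d by (simp add: ln_div)
      then have "(q / 2) * (1 - d / (16 * q)) \<le> (q / 2) * ln (16 * q / d)"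
        using q by (intro mult_left_mono) auto
      moreover have "(q / 2) * (1 - d / (16 * q)) = q / 2 - d / 32" using q by (simp add: field_simps)
      ultimately show ?thesis using q d by linarith
    qed
    also have "\<dots> = ln ((16 * q / d) powr (q / 2))"
      using q d by (simp add: ln_powr)
    finally show ?thesis using q d by (subst (asm) ln_le_cancel_iff) auto
  qed
  have "2 powr q * ((2 * q / m) powr (q / 2) * sqrt 2 ^ n) = (2 powr q * (2 * q / m) powr (q / 2)) * sqrt 2 ^ n"
    by simp
  also have "\<dots> \<le> (16 * q / d) powr (q / 2) * sqrt 2 ^ n"
    using a by (intro mult_right_mono) auto
  finally have c: "2 powr q * ((2 * q / m) powr (q / 2) * sqrt 2 ^ n) \<le> (16 * q / d) powr (q / 2) * sqrt 2 ^ n" .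
  have e: "(sqrt 2 ^ n + 1) * (16 * q / d) powr (q / 2) = (16 * q / d) powr (q / 2) * sqrt 2 ^ n + (16 * q / d) powr (q / 2)"
    by (simp add: algebra_simps)
  show ?thesis using b c e by linarith
qed

lemma moment:
  fixes d i :: nat and q :: real
  assumes d: "d \<ge> 2" and i: "i < d" and q: "q > 0"
  shows "(\<integral>\<^sup>+ x. indicator (BS {..<d} 1) x * ennreal ((norm (x i) / sqrt (nsq {..<d} x)) powr q)
            \<partial>PiM {..<d} (\<lambda>_. lborel::'a::euclidean_space measure))
     \<le> ennreal ((sqrt 2 ^ DIM('a) + 1) * (16 * q / d) powr (q / 2)) *
         emeasure (PiM {..<d} (\<lambda>_. lborel::'a measure)) (BS {..<d} 1)"
proof -
  let ?L = "\<lambda>_::nat. lborel::'a measure"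
  let ?M = "PiM {..<d} ?L"
  define J where "J = {..<d} - {i}"
  have IJ: "{..<d} = insert i J" using i by (auto simp: J_def)
  have fJ: "finite J" and iJ: "i \<notin> J" by (auto simp: J_def)
  have cJ: "card J = d - 1" using i by (simp add: J_def)
  have Jne: "J \<noteq> {}" using cJ d by auto
  define k where "k = DIM('a)"
  define m where "m = real (k * card J)"
  have k1: "k \<ge> 1" by (simp add: k_def DIM_positive Suc_le_eq)
  have m2: "m \<ge> real d / 2"
  proof -
    have "real d / 2 \<le> real (card J)" using cJ d by simp
    also have "\<dots> \<le> real (k * card J)"
    proof -
      have "card J \<le> k * card J" using k1 by simp
      then show ?thesis by (simp only: of_nat_le_iff)
    qed
    finally show ?thesis by (simp add: m_def)
  qed
  have mpos: "m > 0" using m2 d by simp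
  define V where "V = emeasure ?M (BS {..<d} 1)"
  define VJ where "VJ = emeasure (PiM J ?L) (BS J 1)"
  define D where "D = (\<lambda>a. \<integral>\<^sup>+ y. ennreal (max 0 (1 - (norm y)\<^sup>2) powr a) \<partial>(lborel::'a measure))"
  have W: "emeasure (PiM J ?L) (BS J s) = ennreal (max 0 s powr (m / 2)) * VJ" for s
    using BS_measure[OF fJ Jne, of s, where 'a='a] by (simp add: m_def k_def VJ_def)
  have fub: "(\<integral>\<^sup>+ x. h (x i) * indicator (BS {..<d} 1) x \<partial>?M)
      = (\<integral>\<^sup>+ y. h y * (ennreal (max 0 (1 - (norm y)\<^sup>2) powr (m / 2)) * VJ) \<partial>(lborel::'a measure))"
    if [measurable]: "h \<in> borel_measurable borel" for h :: "'a \<Rightarrow> ennreal"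
    unfolding IJ using fubini_ball[OF fJ iJ, of h] by (simp add: W)
  have V: "V = D (m / 2) * VJ"
  proof -
    have "V = (\<integral>\<^sup>+ x. (\<lambda>_. 1) (x i) * indicator (BS {..<d} 1) x \<partial>?M)"
      by (simp add: V_def)
    also have "\<dots> = (\<integral>\<^sup>+ y. 1 * (ennreal (max 0 (1 - (norm y)\<^sup>2) powr (m / 2)) * VJ) \<partial>(lborel::'a measure))"
      using fub[where h="\<lambda>_. 1"] by simp
    also have "\<dots> = D (m / 2) * VJ"
      by (simp add: D_def nn_integral_multc)
    finally show ?thesis .
  qed
  have N: "(\<integral>\<^sup>+ x. ennreal (norm (x i) powr q) * indicator (BS {..<d} 1) x \<partial>?M)
      \<le> ennreal ((2 * q / m) powr (q / 2) * sqrt 2 ^ k) * V"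
  proof -
    have "(\<integral>\<^sup>+ x. ennreal (norm (x i) powr q) * indicator (BS {..<d} 1) x \<partial>?M)
        = (\<integral>\<^sup>+ y. ennreal (norm y powr q) * (ennreal (max 0 (1 - (norm y)\<^sup>2) powr (m / 2)) * VJ) \<partial>(lborel::'a measure))"
      by (rule fub[where h="\<lambda>y. ennreal (norm y powr q)"]) measurable
    also have "\<dots> \<le> (\<integral>\<^sup>+ y. ennreal ((2 * q / m) powr (q / 2)) * ennreal (max 0 (1 - (norm y)\<^sup>2) powr (m / 4)) * VJ \<partial>(lborel::'a measure))"
    proof (intro nn_integral_mono)
      fix y :: 'a
      have "ennreal (norm y powr q) * ennreal (max 0 (1 - (norm y)\<^sup>2) powr (m / 2))
          = ennreal (norm y powr q * max 0 (1 - (norm y)\<^sup>2) powr (m / 2))"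
        by (simp add: ennreal_mult)
      also have "\<dots> \<le> ennreal ((2 * q / m) powr (q / 2) * max 0 (1 - (norm y)\<^sup>2) powr (m / 4))"
        using num_pt[OF q mpos, of y] by (intro ennreal_leI) simp
      also have "\<dots> = ennreal ((2 * q / m) powr (q / 2)) * ennreal (max 0 (1 - (norm y)\<^sup>2) powr (m / 4))"
        by (simp add: ennreal_mult)
      finally show "ennreal (norm y powr q) * (ennreal (max 0 (1 - (norm y)\<^sup>2) powr (m / 2)) * VJ)
          \<le> ennreal ((2 * q / m) powr (q / 2)) * ennreal (max 0 (1 - (norm y)\<^sup>2) powr (m / 4)) * VJ"
        by (simp add: mult.assoc[symmetric] mult_right_mono)
    qed
    also have "\<dots> = ennreal ((2 * q / m) powr (q / 2)) * D (m / 4) * VJ"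
      by (simp add: D_def nn_integral_multc nn_integral_cmult)
    also have "\<dots> \<le> ennreal ((2 * q / m) powr (q / 2)) * (ennreal (sqrt 2 ^ k) * D (m / 2)) * VJ"
    proof -
      have "D (m / 4) \<le> ennreal (sqrt 2 ^ k) * D (2 * (m / 4))"
        unfolding D_def k_def using mpos by (intro D_compare) auto
      also have "2 * (m / 4) = m / 2" by simp
      finally show ?thesis by (intro mult_right_mono mult_left_mono) auto
    qed
    also have "\<dots> = ennreal ((2 * q / m) powr (q / 2) * sqrt 2 ^ k) * V"
      by (simp add: V ennreal_mult mult.assoc)
    finally show ?thesis .
  qed
  have Q: "emeasure ?M (BS {..<d} (1/4)) = ennreal ((1/4) powr (real k * real d / 2)) * V"
  proof -
    have ne: "{..<d} \<noteq> {}" using d lessThan_empty_iff[of d] by auto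
    show ?thesis using BS_measure[OF _ ne, of "1/4", where 'a='a] by (simp add: V_def k_def)
  qed
  have S: "indicator (BS {..<d} 1) x * ennreal ((norm (x i) / sqrt (nsq {..<d} x)) powr q)
      \<le> ennreal (2 powr q) * (ennreal (norm (x i) powr q) * indicator (BS {..<d} 1) x) + indicator (BS {..<d} (1/4)) x"
    if x: "x \<in> space ?M" for x
  proof (cases "x \<in> BS {..<d} 1")
    case False then show ?thesis by simp
  next
    case True
    define s where "s = nsq {..<d} x"
    have s0: "s \<ge> 0" by (simp add: s_def nsq_nonneg)
    have nx: "(norm (x i))\<^sup>2 \<le> s"
      unfolding s_def nsq_def using i by (intro member_le_sum) auto
    have nx': "norm (x i) \<le> sqrt s" using nx by (simp add: real_le_rsqrt)
    show ?thesis
    proof (cases "s \<le> 1/4")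
      case True
      have "(norm (x i) / sqrt s) powr q \<le> 1"
      proof (cases "norm (x i) / sqrt s = 0")
        case False
        then have "norm (x i) / sqrt s > 0" using s0 by (simp add: divide_nonneg_nonneg order_le_less)
        moreover have "norm (x i) / sqrt s \<le> 1" using nx' s0 by (auto simp: divide_le_eq_1)
        ultimately show ?thesis using q by (intro powr_le1) auto
      qed (auto)
      moreover have "x \<in> BS {..<d} (1/4)" using True x by (simp add: BS_def s_def)
      ultimately show ?thesis using \<open>x \<in> BS {..<d} 1\<close> by (simp add: s_def[symmetric] add_increasing)
    next
      case False
      have "(1/2)\<^sup>2 \<le> s" using False by (simp add: power2_eq_square)
      then have sq: "sqrt s \<ge> 1/2" by (rule real_le_rsqrt)
      have "(norm (x i) / sqrt s) powr q = norm (x i) powr q / sqrt s powr q"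
        using s0 by (simp add: powr_divide)
      also have "\<dots> \<le> norm (x i) powr q / (1/2) powr q"
        using sq q by (intro divide_left_mono powr_mono2) (auto intro!: mult_pos_pos)
      also have "\<dots> = 2 powr q * norm (x i) powr q"
        by (simp add: powr_divide)
      finally have "ennreal ((norm (x i) / sqrt s) powr q) \<le> ennreal (2 powr q) * ennreal (norm (x i) powr q)"
        by (simp add: ennreal_mult[symmetric] ennreal_leI)
      then show ?thesis using \<open>x \<in> BS {..<d} 1\<close> by (simp add: s_def[symmetric] add_increasing2)
    qed
  qed
  have "(\<integral>\<^sup>+ x. indicator (BS {..<d} 1) x * ennreal ((norm (x i) / sqrt (nsq {..<d} x)) powr q) \<partial>?M)
      \<le> (\<integral>\<^sup>+ x. ennreal (2 powr q) * (ennreal (norm (x i) powr q) * indicator (BS {..<d} 1) x) + indicator (BS {..<d} (1/4)) x \<partial>?M)"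
    by (intro nn_integral_mono S)
  also have "\<dots> = ennreal (2 powr q) * (\<integral>\<^sup>+ x. ennreal (norm (x i) powr q) * indicator (BS {..<d} 1) x \<partial>?M)
      + emeasure ?M (BS {..<d} (1/4))"
    using i by (simp add: nn_integral_add nn_integral_cmult)
  also have "\<dots> \<le> ennreal (2 powr q) * (ennreal ((2 * q / m) powr (q / 2) * sqrt 2 ^ k) * V)
      + ennreal ((1/4) powr (real k * real d / 2)) * V"
    using N Q by (intro add_mono mult_left_mono) auto
  also have "\<dots> = ennreal (2 powr q * ((2 * q / m) powr (q / 2) * sqrt 2 ^ k) + (1/4) powr (real k * real d / 2)) * V"
    by (simp add: ennreal_mult ennreal_plus distrib_right mult.assoc)
  also have "\<dots> \<le> ennreal ((sqrt 2 ^ k + 1) * (16 * q / d) powr (q / 2)) * V"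
  proof (intro mult_right_mono ennreal_leI)
    show "2 powr q * ((2 * q / m) powr (q / 2) * sqrt 2 ^ k) + (1/4) powr (real k * real d / 2)
        \<le> (sqrt 2 ^ k + 1) * (16 * q / d) powr (q / 2)"
      using moment_const[OF q _ _ m2, of "real k" k] d k1 by simp
  qed auto
  finally show ?thesis by (simp add: V_def k_def)
qed

definition sph :: "nat \<Rightarrow> (nat \<Rightarrow> 'a::real_normed_vector) \<Rightarrow> bool" where
  "sph d z \<longleftrightarrow> (\<Sum>i<d. (norm (z i))\<^sup>2) = 1"

definition UU :: "nat \<Rightarrow> (nat \<Rightarrow> 'a::real_normed_vector) \<Rightarrow> (nat \<Rightarrow> 'a)" where
  "UU d x = restrict (\<lambda>i. x i /\<^sub>R l2norm d x) {..<d}"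

lemma Kd_eq: "Kd_measure (TYPE('a::euclidean_space)) d = PiM {..<d} (\<lambda>_. lborel::'a measure)"
  by (simp add: Kd_measure_def)

lemma l2norm_nsq: "l2norm d x = sqrt (nsq {..<d} x)"
  by (simp add: l2norm_def nsq_def)

lemma ball_eq: "unit_ball_d (TYPE('a::euclidean_space)) d = (BS {..<d} 1 :: (nat \<Rightarrow> 'a) set)"
  by (auto simp: unit_ball_d_def BS_def Kd_eq l2norm_nsq)

lemma SI_eq: "sphere_integral (TYPE('a::euclidean_space)) d f =
   (\<integral>x. indicator (BS {..<d} 1) x * f (UU d x) \<partial>PiM {..<d} (\<lambda>_. lborel::'a measure))
     / measure (PiM {..<d} (\<lambda>_. lborel::'a measure)) (BS {..<d} 1)"
  by (simp add: sphere_integral_def ball_eq Kd_eq UU_def)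

lemma l2norm_measurable[measurable]:
  "l2norm d \<in> borel_measurable (PiM {..<d} (\<lambda>_. lborel::'a::euclidean_space measure))"
  unfolding l2norm_def[abs_def] by measurable

lemma UU_measurable[measurable]:
  "UU d \<in> PiM {..<d} (\<lambda>_. lborel::'a::euclidean_space measure) \<rightarrow>\<^sub>M PiM {..<d} (\<lambda>_. lborel::'a measure)"
  unfolding UU_def[abs_def] by (intro measurable_restrict) measurable

lemma UU_sph:
  assumes "nsq {..<d} x \<noteq> 0"
  shows "sph d (UU d x)"
proof -
  have n: "nsq {..<d} x > 0" using assms nsq_nonneg[of "{..<d}" x] by simp
  have "(\<Sum>i<d. (norm (UU d x i))\<^sup>2) = (\<Sum>i<d. (norm (x i))\<^sup>2 / nsq {..<d} x)"
    using n by (intro sum.cong) (auto simp: UU_def l2norm_nsq power_mult_distrib power_inverse divide_inverse mult.commute)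
  also have "\<dots> = 1" using n by (simp add: sum_divide_distrib[symmetric] nsq_def)
  finally show ?thesis by (simp add: sph_def)
qed

lemma norm_UU: "i < d \<Longrightarrow> norm (UU d x i) = norm (x i) / sqrt (nsq {..<d} x)"
  by (simp add: UU_def l2norm_nsq divide_inverse mult.commute nsq_nonneg)

lemma AE_nz:
  assumes d: "d \<ge> 1"
  shows "AE x in PiM {..<d} (\<lambda>_. lborel::'a::euclidean_space measure). nsq {..<d} x \<noteq> 0"
proof (rule AE_I')
  have ne: "{..<d} \<noteq> {}" using d lessThan_empty_iff[of d] by auto
  show "(BS {..<d} 0 :: (nat \<Rightarrow> 'a) set) \<in> null_sets (PiM {..<d} (\<lambda>_. lborel::'a measure))"
    using BS_zero[OF _ ne, where 'a='a] by (simp add: null_sets_def)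
  show "{x \<in> space (PiM {..<d} (\<lambda>_. lborel::'a measure)). \<not> nsq {..<d} x \<noteq> 0} \<subseteq> BS {..<d} 0"
    by (auto simp: BS_def)
qed

context
  fixes d :: nat and TY :: "'a::euclidean_space itself"
  assumes d: "d \<ge> 1"
begin

abbreviation "MM \<equiv> PiM {..<d} (\<lambda>_. lborel::'a measure)"
abbreviation "BB \<equiv> (BS {..<d} 1 :: (nat \<Rightarrow> 'a) set)"

lemma BB_pos: "measure MM BB > 0"
proof -
  have ne: "{..<d} \<noteq> {}" using d lessThan_empty_iff[of d] by auto
  have "emeasure MM BB > 0" using BS_pos[OF _ ne, where 'a='a] by simp
  moreover have "emeasure MM BB < \<infinity>" using BS_fin[of "{..<d}" 1, where 'a='a] by simp
  ultimately show ?thesis by (simp add: measure_def enn2real_positive_iff)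
qed

lemma BB_em: "emeasure MM BB = ennreal (measure MM BB)"
  using BS_fin[of "{..<d}" 1, where 'a='a] by (simp add: emeasure_eq_ennreal_measure)

lemma SI_integrable:
  fixes f :: "(nat \<Rightarrow> 'a) \<Rightarrow> real"
  assumes f[measurable]: "f \<in> borel_measurable MM" and bnd: "\<And>z. sph d z \<Longrightarrow> \<bar>f z\<bar> \<le> C"
  shows "integrable MM (\<lambda>x. indicator BB x * f (UU d x))"
proof (rule integrableI_bounded_set[where A=BB and B=C])
  show "emeasure MM BB < \<infinity>" using BS_fin[of "{..<d}" 1, where 'a='a] by simp
  show "AE x in MM. x \<in> BB \<longrightarrow> norm (indicator BB x * f (UU d x)) \<le> C"
    using AE_nz[OF d, where 'a='a] by eventually_elim (auto simp: bnd UU_sph)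
  show "AE x in MM. x \<notin> BB \<longrightarrow> indicator BB x * f (UU d x) = 0" by simp
qed measurable

lemma SI_mono:
  fixes f g :: "(nat \<Rightarrow> 'a) \<Rightarrow> real"
  assumes f[measurable]: "f \<in> borel_measurable MM" and bf: "\<And>z. sph d z \<Longrightarrow> \<bar>f z\<bar> \<le> Cf"
  assumes g[measurable]: "g \<in> borel_measurable MM" and bg: "\<And>z. sph d z \<Longrightarrow> \<bar>g z\<bar> \<le> Cg"
  assumes le: "\<And>z. sph d z \<Longrightarrow> f z \<le> g z"
  shows "sphere_integral TYPE('a) d f \<le> sphere_integral TYPE('a) d g"
proof -
  have "(\<integral>x. indicator BB x * f (UU d x) \<partial>MM) \<le> (\<integral>x. indicator BB x * g (UU d x) \<partial>MM)"
  proof (rule integral_mono_AE)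
    show "integrable MM (\<lambda>x. indicator BB x * f (UU d x))" by (rule SI_integrable[OF f bf])
    show "integrable MM (\<lambda>x. indicator BB x * g (UU d x))" by (rule SI_integrable[OF g bg])
    show "AE x in MM. indicator BB x * f (UU d x) \<le> indicator BB x * g (UU d x)"
      using AE_nz[OF d, where 'a='a] by eventually_elim (auto simp: le UU_sph indicator_def)
  qed
  then show ?thesis unfolding SI_eq using BB_pos by (intro divide_right_mono) auto
qed

lemma SI_cong:
  fixes f g :: "(nat \<Rightarrow> 'a) \<Rightarrow> real"
  assumes f[measurable]: "f \<in> borel_measurable MM" and bf: "\<And>z. sph d z \<Longrightarrow> \<bar>f z\<bar> \<le> Cf"
  assumes g[measurable]: "g \<in> borel_measurable MM" and bg: "\<And>z. sph d z \<Longrightarrow> \<bar>g z\<bar> \<le> Cg"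
  assumes eq: "\<And>z. sph d z \<Longrightarrow> f z = g z"
  shows "sphere_integral TYPE('a) d f = sphere_integral TYPE('a) d g"
  using SI_mono[OF f bf g bg] SI_mono[OF g bg f bf] eq by (simp add: order_antisym)

lemma SI_affine:
  fixes f :: "(nat \<Rightarrow> 'a) \<Rightarrow> real"
  assumes f[measurable]: "f \<in> borel_measurable MM" and bf: "\<And>z. sph d z \<Longrightarrow> \<bar>f z\<bar> \<le> Cf"
  shows "sphere_integral TYPE('a) d (\<lambda>z. a * f z + b) = a * sphere_integral TYPE('a) d f + b"
proof -
  have i1: "integrable MM (\<lambda>x. indicator BB x * f (UU d x))" by (rule SI_integrable[OF f bf])
  have i2: "integrable MM (\<lambda>x. indicator BB x :: real)"
    using BS_fin[of "{..<d}" 1, where 'a='a] by (intro integrable_real_indicator) auto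
  have "(\<integral>x. indicator BB x * (a * f (UU d x) + b) \<partial>MM)
      = (\<integral>x. a * (indicator BB x * f (UU d x)) + b * indicator BB x \<partial>MM)"
    by (intro Bochner_Integration.integral_cong) (auto simp: algebra_simps)
  also have "\<dots> = (\<integral>x. a * (indicator BB x * f (UU d x)) \<partial>MM) + (\<integral>x. b * indicator BB x \<partial>MM)"
    by (rule Bochner_Integration.integral_add) (use i1 i2 in auto)
  also have "\<dots> = a * (\<integral>x. indicator BB x * f (UU d x) \<partial>MM) + b * measure MM BB"
  proof -
    have "BB \<inter> space MM = BB" by (auto simp: BS_def)
    then show ?thesis by simp
  qed
  finally show ?thesis unfolding SI_eq using BB_pos by (simp add: field_simps)
qed

lemma SI_const: "sphere_integral TYPE('a) d (\<lambda>z. c) = c"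
  using SI_affine[of "\<lambda>_. 0" 0 0 c] by simp

lemma SI_nn:
  fixes f :: "(nat \<Rightarrow> 'a) \<Rightarrow> real"
  assumes f[measurable]: "f \<in> borel_measurable MM" and bf: "\<And>z. sph d z \<Longrightarrow> \<bar>f z\<bar> \<le> Cf"
    and nn: "\<And>z. sph d z \<Longrightarrow> 0 \<le> f z" and C: "C \<ge> 0"
    and le: "(\<integral>\<^sup>+ x. ennreal (indicator BB x * f (UU d x)) \<partial>MM) \<le> ennreal C * emeasure MM BB"
  shows "sphere_integral TYPE('a) d f \<le> C"
proof -
  have i1: "integrable MM (\<lambda>x. indicator BB x * f (UU d x))" by (rule SI_integrable[OF f bf])
  have "ennreal (\<integral>x. indicator BB x * f (UU d x) \<partial>MM) = (\<integral>\<^sup>+ x. ennreal (indicator BB x * f (UU d x)) \<partial>MM)"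
    using i1 AE_nz[OF d, where 'a='a]
    by (intro nn_integral_eq_integral[symmetric]) (auto elim!: eventually_mono simp: nn UU_sph)
  also have "\<dots> \<le> ennreal (C * measure MM BB)"
    using le C by (simp add: BB_em ennreal_mult)
  finally have "(\<integral>x. indicator BB x * f (UU d x) \<partial>MM) \<le> C * measure MM BB"
    using C BB_pos by (subst (asm) ennreal_le_iff) auto
  then show ?thesis unfolding SI_eq using BB_pos by (simp add: divide_le_eq)
qed

lemma SI_ln:
  fixes f :: "(nat \<Rightarrow> 'a) \<Rightarrow> real"
  assumes f[measurable]: "f \<in> borel_measurable MM" and bf: "\<And>z. sph d z \<Longrightarrow> \<bar>f z\<bar> \<le> Cf"
    and lbf: "\<And>z. sph d z \<Longrightarrow> \<bar>ln (f z)\<bar> \<le> Cl"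
    and pos: "\<And>z. sph d z \<Longrightarrow> 0 < f z" and A: "A > 0"
    and SA: "sphere_integral TYPE('a) d f \<le> A"
  shows "sphere_integral TYPE('a) d (\<lambda>z. ln (f z)) \<le> ln A"
proof -
  have "sphere_integral TYPE('a) d (\<lambda>z. ln (f z)) \<le> sphere_integral TYPE('a) d (\<lambda>z. (1 / A) * f z + (ln A - 1))"
  proof (rule SI_mono[where Cf=Cl and Cg="\<bar>1/A\<bar> * Cf + \<bar>ln A - 1\<bar>"])
    show "\<bar>(1 / A) * f z + (ln A - 1)\<bar> \<le> \<bar>1/A\<bar> * Cf + \<bar>ln A - 1\<bar>" if "sph d z" for z
    proof -
      have "\<bar>(1 / A) * f z + (ln A - 1)\<bar> \<le> \<bar>1/A\<bar> * \<bar>f z\<bar> + \<bar>ln A - 1\<bar>"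
        by (metis abs_mult abs_triangle_ineq)
      also have "\<dots> \<le> \<bar>1/A\<bar> * Cf + \<bar>ln A - 1\<bar>"
        using bf[OF that] by (intro add_right_mono mult_left_mono) auto
      finally show ?thesis .
    qed
    show "ln (f z) \<le> (1 / A) * f z + (ln A - 1)" if "sph d z" for z
    proof -
      have "ln (f z / A) \<le> f z / A - 1" using pos[OF that] A by (intro ln_le_minus_one) auto
      then show ?thesis using pos[OF that] A by (simp add: ln_div)
    qed
  qed (use lbf in auto)
  also have "\<dots> = (1 / A) * sphere_integral TYPE('a) d f + (ln A - 1)"
    by (rule SI_affine[OF f bf])
  also have "\<dots> \<le> (1 / A) * A + (ln A - 1)"
    using SA A by (intro add_right_mono mult_left_mono) auto
  finally show ?thesis using A by simp
qed

end

lemma pm_ineq: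
  fixes y :: "nat \<Rightarrow> real"
  assumes y: "\<And>i. i < d \<Longrightarrow> 0 \<le> y i" and s: "0 < s" "s \<le> 1" and d: "d \<ge> 1"
  shows "(\<Sum>i<d. y i powr s) \<le> real d powr (1 - s) * (\<Sum>i<d. y i) powr s"
proof (cases "(\<Sum>i<d. y i) = 0")
  case True
  then have "\<forall>i\<in>{..<d}. y i = 0" using y by (subst sum_nonneg_eq_0_iff[symmetric]) auto
  then show ?thesis by simp
next
  case False
  define Y where "Y = (\<Sum>i<d. y i)"
  have Y: "Y > 0" using False y unfolding Y_def by (metis lessThan_iff order_less_le sum_nonneg)
  define c where "c = Y / d"
  have c: "c > 0" using Y d by (simp add: c_def)
  have each: "y i powr s \<le> c powr s * (s * (y i / c) + (1 - s))" if "i < d" for i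
  proof (cases "y i = 0")
    case True then show ?thesis using s c by simp
  next
    case False
    then have yi: "y i > 0" using y[OF that] by simp
    have "y i powr s = c powr s * ((y i / c) powr s * 1 powr (1 - s))"
      using yi c by (simp add: powr_divide)
    also have "\<dots> \<le> c powr s * (s * (y i / c) + (1 - s) * 1)"
      using yi c s by (intro mult_left_mono Youngs_inequality_0) auto
    finally show ?thesis by simp
  qed
  have "(\<Sum>i<d. y i powr s) \<le> (\<Sum>i<d. c powr s * (s * (y i / c) + (1 - s)))"
    by (intro sum_mono each) auto
  also have "\<dots> = (\<Sum>i<d. (c powr s * s / c) * y i + c powr s * (1 - s))"
    by (intro sum.cong) (auto simp: algebra_simps)
  also have "\<dots> = (c powr s * s / c) * Y + d * (c powr s * (1 - s))"
    by (simp only: sum.distrib sum_distrib_left[symmetric] Y_def sum_constant) simp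
  also have "\<dots> = c powr s * (s / c * Y + d * (1 - s))"
    by (simp add: algebra_simps)
  also have "\<dots> = c powr s * d"
    using c Y d by (simp add: c_def field_simps)
  also have "\<dots> = real d powr (1 - s) * Y powr s"
    using d Y by (simp add: c_def powr_divide powr_diff field_simps)
  finally show ?thesis by (simp add: Y_def)
qed

context
  fixes d :: nat and z :: "nat \<Rightarrow> 'a::real_normed_vector"
  assumes sph: "(\<Sum>i<d. (norm (z i))\<^sup>2) = 1"
begin

lemma sph_exists: "\<exists>i<d. z i \<noteq> 0"
proof (rule ccontr)
  assume "\<not> ?thesis"
  then have "(\<Sum>i<d. (norm (z i))\<^sup>2) = 0" by simp
  with sph show False by simp
qed

lemma sph_d: "d \<ge> 1"
  using sph_exists by auto

lemma sph_S_pos: "p > 0 \<Longrightarrow> (\<Sum>i<d. norm (z i) powr p) > 0"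
proof -
  assume p: "p > 0"
  obtain j where j: "j < d" "z j \<noteq> 0" using sph_exists by auto
  have "0 < norm (z j) powr p" using j by simp
  also have "\<dots> \<le> (\<Sum>i<d. norm (z i) powr p)"
    using j by (intro member_le_sum) auto
  finally show ?thesis .
qed

lemma sph_sq: "(\<Sum>i<d. norm (z i) powr 2) = 1"
  using sph by (simp add: powr_numeral)

lemma sph_lnS: "p > 0 \<Longrightarrow> ln (1 / pnorm d p z) = - (1 / p) * ln (\<Sum>i<d. norm (z i) powr p)"
  using sph_S_pos[of p] by (simp add: pnorm_def ln_div ln_powr)

lemma sph_T1:
  assumes p: "p \<ge> 2"
  shows "ln (1 / pnorm d p z) \<le> (1/2 - 1/p) * ln d"
proof -
  define S where "S = (\<Sum>i<d. norm (z i) powr p)"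
  have S: "S > 0" using sph_S_pos p by (simp add: S_def)
  have "1 = (\<Sum>i<d. (norm (z i) powr p) powr (2 / p))"
    using sph_sq p by (simp add: powr_powr)
  also have "\<dots> \<le> real d powr (1 - 2 / p) * S powr (2 / p)"
    unfolding S_def using p sph_d by (intro pm_ineq) auto
  finally have "0 \<le> ln (real d powr (1 - 2 / p) * S powr (2 / p))"
    by simp
  then have "0 \<le> (1 - 2/p) * ln d + (2/p) * ln S"
    using S sph_d by (simp add: ln_mult ln_powr)
  then have "- (1/p) * ln S \<le> (1/2 - 1/p) * ln d"
    using p by (simp add: field_simps)
  then show ?thesis using sph_lnS p by (simp add: S_def)
qed

lemma sph_T2:
  assumes p: "p > 0" "p \<le> 2"
  shows "(1/2 - 1/p) * ln d \<le> ln (1 / pnorm d p z)"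
proof -
  define S where "S = (\<Sum>i<d. norm (z i) powr p)"
  have S: "S > 0" using sph_S_pos p by (simp add: S_def)
  have e: "(norm (z i) powr 2) powr (p / 2) = norm (z i) powr p" for i
    by (simp only: powr_powr) simp
  have "S = (\<Sum>i<d. (norm (z i) powr 2) powr (p / 2))"
    by (simp only: S_def e)
  also have "\<dots> \<le> real d powr (1 - p / 2) * (\<Sum>i<d. norm (z i) powr 2) powr (p / 2)"
    using p sph_d by (intro pm_ineq) auto
  also have "\<dots> = real d powr (1 - p / 2)" using sph_sq by simp
  finally have Sle: "S \<le> real d powr (1 - p / 2)" .
  have "ln S \<le> ln (real d powr (1 - p / 2))"
    using S Sle sph_d by (subst ln_le_cancel_iff) auto
  also have "\<dots> = (1 - p / 2) * ln d"
    using sph_d by (simp add: ln_powr)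
  finally have h: "ln S \<le> (1 - p / 2) * ln d" .
  have "-(1/p)*((1-p/2)*ln d) \<le> -(1/p)*ln S" using h p by (intro mult_left_mono_neg) auto
  moreover have "-(1/p)*((1-p/2)*ln d) = (1/2-1/p)*ln d" using p by (simp add: field_simps)
  ultimately have "(1/2 - 1/p) * ln d \<le> - (1/p) * ln S" by simp
  then show ?thesis using sph_lnS p by (simp add: S_def)
qed

lemma sph_inf: "infnorm_d d z = Max ((\<lambda>i. norm (z i)) ` {..<d})"
proof -
  have "0 \<in> {..<d}" using sph_d by simp
  then have ne: "(\<lambda>i. norm (z i)) ` {..<d} \<noteq> {}" by blast
  have "Max ((\<lambda>i. norm (z i)) ` {..<d}) \<ge> 0"
    using ne sph_d by (meson Max_ge finite_imageI finite_lessThan imageI lessThan_iff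
      norm_ge_zero order_trans less_le_trans zero_less_one)
  then show ?thesis unfolding infnorm_d_def using ne
    by (simp add: Max_insert max_def)
qed

lemma sph_inf_ge: "i < d \<Longrightarrow> norm (z i) \<le> infnorm_d d z"
  unfolding sph_inf by (intro Max_ge) auto

lemma sph_inf_attained: "\<exists>i<d. infnorm_d d z = norm (z i)"
proof -
  have "0 \<in> {..<d}" using sph_d by simp
  then have ne: "(\<lambda>i. norm (z i)) ` {..<d} \<noteq> {}" by blast
  have "Max ((\<lambda>i. norm (z i)) ` {..<d}) \<in> (\<lambda>i. norm (z i)) ` {..<d}"
    using ne by (intro Max_in) auto
  then show ?thesis unfolding sph_inf by auto
qed

lemma sph_inf_pos: "infnorm_d d z > 0"
proof -
  obtain j where j: "j < d" "z j \<noteq> 0" using sph_exists by auto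
  then have "0 < norm (z j)" by simp
  then show ?thesis using sph_inf_ge[OF j(1)] by linarith
qed

lemma sph_T3: "ln (1 / infnorm_d d z) \<le> (1/2) * ln d"
proof -
  define N where "N = infnorm_d d z"
  have N: "N > 0" using sph_inf_pos by (simp add: N_def)
  have "1 = (\<Sum>i<d. (norm (z i))\<^sup>2)" using sph by simp
  also have "\<dots> \<le> (\<Sum>i<d. N\<^sup>2)"
    using sph_inf_ge by (intro sum_mono power_mono) (auto simp: N_def)
  also have "\<dots> = d * N\<^sup>2" by simp
  finally have "ln 1 \<le> ln (d * N\<^sup>2)" using N sph_d by (subst ln_le_cancel_iff) auto
  then have "0 \<le> ln d + 2 * ln N" using N sph_d by (simp add: ln_mult ln_realpow)
  then show ?thesis using N by (simp add: N_def ln_div)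
qed

lemma sph_Cpt:
  assumes q: "q > 0"
  shows "- (1/q) * ln (\<Sum>i<d. norm (z i) powr q) \<le> ln (1 / infnorm_d d z)"
proof -
  define N where "N = infnorm_d d z"
  have N: "N > 0" using sph_inf_pos by (simp add: N_def)
  obtain j where j: "j < d" "N = norm (z j)" using sph_inf_attained by (auto simp: N_def)
  have "N powr q \<le> (\<Sum>i<d. norm (z i) powr q)"
    using j by (simp, intro member_le_sum) auto
  then have "ln (N powr q) \<le> ln (\<Sum>i<d. norm (z i) powr q)"
    using N sph_S_pos[OF q] by (subst ln_le_cancel_iff) auto
  then have "q * ln N \<le> ln (\<Sum>i<d. norm (z i) powr q)" using N by (simp add: ln_powr)
  then show ?thesis using N q by (simp add: N_def ln_div field_simps)
qed

lemma sph_Bpt: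
  assumes p: "p > 0" "p \<le> 2"
  shows "ln (1 / pnorm d p z) \<le> - ((4 - p) / p) * ln (1 / pnorm d (4 - p) z)"
proof -
  define r where "r = 4 - p"
  have r: "r > 0" using p by (simp add: r_def)
  define Sp where "Sp = (\<Sum>i<d. norm (z i) powr p)"
  define Sr where "Sr = (\<Sum>i<d. norm (z i) powr r)"
  have Sp: "Sp > 0" using sph_S_pos p by (simp add: Sp_def)
  have Sr: "Sr > 0" using sph_S_pos r by (simp add: Sr_def)
  have eq: "norm (z i) powr (p/2) * norm (z i) powr (r/2) = (norm (z i))\<^sup>2" for i
  proof (cases "z i = 0")
    case False
    have "norm (z i) powr (p/2) * norm (z i) powr (r/2) = norm (z i) powr (p/2 + r/2)"
      by (simp add: powr_add)
    also have "p/2 + r/2 = 2" by (simp add: r_def field_simps)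
    finally show ?thesis by (simp add: powr_numeral)
  qed (use p r in simp)
  have "1 = (\<Sum>i<d. norm (z i) powr (p/2) * norm (z i) powr (r/2))\<^sup>2"
    using sph by (simp add: eq)
  also have "\<dots> \<le> (\<Sum>i<d. (norm (z i) powr (p/2))\<^sup>2) * (\<Sum>i<d. (norm (z i) powr (r/2))\<^sup>2)"
    by (rule Cauchy_Schwarz_ineq_sum)
  also have "\<dots> = Sp * Sr"
  proof -
    have e: "(norm (z i) powr (t/2))\<^sup>2 = norm (z i) powr t" for t i
    proof -
      have "(norm (z i) powr (t/2))\<^sup>2 = norm (z i) powr (t/2) * norm (z i) powr (t/2)"
        by (simp add: power2_eq_square)
      also have "\<dots> = norm (z i) powr t" by (simp add: powr_add[symmetric])
      finally show ?thesis .
    qed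
    show ?thesis by (simp only: e Sp_def Sr_def)
  qed
  finally have "ln 1 \<le> ln (Sp * Sr)" using Sp Sr by (subst ln_le_cancel_iff) auto
  then have "0 \<le> ln Sp + ln Sr" using Sp Sr by (simp add: ln_mult)
  then have "- (1/p) * ln Sp \<le> - (r/p) * (- (1/r) * ln Sr)"
    using p r by (simp add: field_simps)
  then show ?thesis
    using sph_lnS[of p] sph_lnS[of r] p r by (simp add: Sp_def Sr_def r_def)
qed

lemma sph_d1: "d = 1 \<Longrightarrow> p > 0 \<Longrightarrow> ln (1 / pnorm d p z) = 0"
proof -
  assume d: "d = 1" and p: "p > 0"
  have "norm (z 0) = 1" using sph d norm_ge_zero[of "z 0"] by (auto simp: power2_eq_1_iff)
  then show ?thesis using d p by (simp add: pnorm_def)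
qed

end

lemma Sq_measurable[measurable]:
  "(\<lambda>z. \<Sum>i<d. norm (z i) powr q) \<in> borel_measurable (PiM {..<d} (\<lambda>_. lborel::'a::euclidean_space measure))"
  by measurable

lemma lnp_measurable[measurable]:
  "(\<lambda>z. ln (1 / pnorm d p z)) \<in> borel_measurable (PiM {..<d} (\<lambda>_. lborel::'a::euclidean_space measure))"
  unfolding pnorm_def by measurable

lemma infnorm_alt: "infnorm_d d z = Max ((\<lambda>i. if i < d then norm (z i) else 0) ` {..d})"
proof -
  have "insert 0 ((\<lambda>i. norm (z i)) ` {..<d}) = (\<lambda>i. if i < d then norm (z i) else 0) ` {..d}"
  proof (intro set_eqI iffI)
    fix x assume "x \<in> insert 0 ((\<lambda>i. norm (z i)) ` {..<d})"
    then show "x \<in> (\<lambda>i. if i < d then norm (z i) else 0) ` {..d}"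
    proof
      assume "x = 0" then show ?thesis by (intro image_eqI[where x=d]) auto
    next
      assume "x \<in> (\<lambda>i. norm (z i)) ` {..<d}"
      then obtain i where "i < d" "x = norm (z i)" by auto
      then show ?thesis by (intro image_eqI[where x=i]) auto
    qed
  next
    fix x assume "x \<in> (\<lambda>i. if i < d then norm (z i) else 0) ` {..d}"
    then show "x \<in> insert 0 ((\<lambda>i. norm (z i)) ` {..<d})" by (auto split: if_splits)
  qed
  then show ?thesis by (simp add: infnorm_d_def)
qed

lemma infnorm_measurable[measurable]:
  "infnorm_d d \<in> borel_measurable (PiM {..<d} (\<lambda>_. lborel::'a::euclidean_space measure))"
proof -
  have "(\<lambda>z. Max ((\<lambda>i. (\<lambda>i z. if i < d then norm (z i) else 0) i z) ` {..d}))
      \<in> borel_measurable (PiM {..<d} (\<lambda>_. lborel::'a::euclidean_space measure))"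
  proof (rule borel_measurable_Max)
    fix i assume "i \<in> {..d}"
    show "(\<lambda>z. if i < d then norm (z i) else 0) \<in> borel_measurable (PiM {..<d} (\<lambda>_. lborel::'a::euclidean_space measure))"
    proof (cases "i < d")
      case True
      then have "i \<in> {..<d}" by simp
      then show ?thesis using True by simp
    qed simp
  qed simp
  then show ?thesis unfolding infnorm_alt[abs_def] by simp
qed

lemma lninf_measurable[measurable]:
  "(\<lambda>z. ln (1 / infnorm_d d z)) \<in> borel_measurable (PiM {..<d} (\<lambda>_. lborel::'a::euclidean_space measure))"
  by measurable

lemma sph_unfold: "sph d z \<Longrightarrow> (\<Sum>i<d. (norm (z i))\<^sup>2) = 1"
  by (simp add: sph_def)

lemma sph_norm_le1: "sph d z \<Longrightarrow> i < d \<Longrightarrow> norm (z i) \<le> 1"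
proof -
  assume s: "sph d z" and i: "i < d"
  have "(norm (z i))\<^sup>2 \<le> (\<Sum>i<d. (norm (z i))\<^sup>2)" using i by (intro member_le_sum) auto
  then have "(norm (z i))\<^sup>2 \<le> 1" using s by (simp add: sph_def)
  then show ?thesis by (simp add: power_le_one_iff abs_square_le_1)
qed

lemma sph_Sq_bounds:
  assumes s: "sph d z" and q: "q > 0"
  shows "0 < (\<Sum>i<d. norm (z i) powr q)" "(\<Sum>i<d. norm (z i) powr q) \<le> d"
    "\<bar>ln (\<Sum>i<d. norm (z i) powr q)\<bar> \<le> (q / 2 + 1) * ln d"
proof -
  have s': "(\<Sum>i<d. (norm (z i))\<^sup>2) = 1" using s by (simp add: sph_def)
  show pos: "0 < (\<Sum>i<d. norm (z i) powr q)" using sph_S_pos[OF s' q] .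
  have "(\<Sum>i<d. norm (z i) powr q) \<le> (\<Sum>i<d. 1)"
    using sph_norm_le1[OF s] q by (intro sum_mono powr_le1) auto
  then show le: "(\<Sum>i<d. norm (z i) powr q) \<le> d" by simp
  have d1: "d \<ge> 1" using sph_d[OF s'] .
  have ld: "ln d \<ge> 0" using d1 by simp
  have up: "ln (\<Sum>i<d. norm (z i) powr q) \<le> ln d" using pos le by (subst ln_le_cancel_iff) auto
  have "- (1/q) * ln (\<Sum>i<d. norm (z i) powr q) \<le> (1/2) * ln d"
    using sph_Cpt[OF s' q] sph_T3[OF s'] by linarith
  then have lo: "- (q/2) * ln d \<le> ln (\<Sum>i<d. norm (z i) powr q)"
    using q by (simp add: field_simps)
  show "\<bar>ln (\<Sum>i<d. norm (z i) powr q)\<bar> \<le> (q / 2 + 1) * ln d"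
  proof -
    have "q * ln d \<ge> 0" using q ld by simp
    moreover have "(q / 2 + 1) * ln d = q * ln d / 2 + ln d" by (simp add: algebra_simps)
    moreover have "- (q/2) * ln d = - (q * ln d / 2)" by simp
    ultimately show ?thesis using up lo ld q unfolding abs_le_iff by linarith
  qed
qed

lemma sph_lnp_bound:
  assumes s: "sph d z" and p: "p > 0"
  shows "\<bar>ln (1 / pnorm d p z)\<bar> \<le> (1 / p) * ((p / 2 + 1) * ln d)"
proof -
  have s': "(\<Sum>i<d. (norm (z i))\<^sup>2) = 1" using s by (simp add: sph_def)
  have "\<bar>ln (1 / pnorm d p z)\<bar> = (1 / p) * \<bar>ln (\<Sum>i<d. norm (z i) powr p)\<bar>"
    using sph_lnS[OF s' p] p by (simp add: abs_mult)
  also have "\<dots> \<le> (1 / p) * ((p / 2 + 1) * ln d)"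
    using sph_Sq_bounds(3)[OF s p] p by (intro mult_left_mono) auto
  finally show ?thesis .
qed

lemma sph_lninf_bound:
  assumes s: "sph d z"
  shows "\<bar>ln (1 / infnorm_d d z)\<bar> \<le> ln d"
proof -
  have s': "(\<Sum>i<d. (norm (z i))\<^sup>2) = 1" using s by (simp add: sph_def)
  have d1: "d \<ge> 1" using sph_d[OF s'] .
  obtain j where j: "j < d" "infnorm_d d z = norm (z j)" using sph_inf_attained[OF s'] by auto
  have N1: "infnorm_d d z \<le> 1" using j sph_norm_le1[OF s j(1)] by simp
  have N0: "infnorm_d d z > 0" using sph_inf_pos[OF s'] .
  have "ln (1 / infnorm_d d z) \<ge> 0" using N0 N1 by simp
  moreover have "ln (1 / infnorm_d d z) \<le> (1/2) * ln d" using sph_T3[OF s'] .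
  moreover have "ln d \<ge> 0" using d1 by simp
  ultimately show ?thesis by auto
qed

context
  fixes d :: nat and TY :: "'a::euclidean_space itself"
  assumes d2: "d \<ge> 2"
begin

lemma d1': "d \<ge> 1" using d2 by simp

definition "Ck = sqrt 2 ^ DIM('a) + 1"

lemma Ck_ge1: "Ck \<ge> 1" by (simp add: Ck_def)

lemma SI_Sq:
  assumes q: "q > 0"
  shows "sphere_integral TYPE('a) d (\<lambda>z. \<Sum>i<d. norm (z i) powr q) \<le> d * (Ck * (16 * q / d) powr (q / 2))"
proof (rule SI_nn[OF d1'])
  show "\<bar>\<Sum>i<d. norm (z i) powr q\<bar> \<le> d" if "sph d z" for z :: "nat \<Rightarrow> 'a"
    using sph_Sq_bounds[OF that q] by simp
  show "0 \<le> (\<Sum>i<d. norm (z i) powr q)" for z :: "nat \<Rightarrow> 'a" by (intro sum_nonneg) auto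
  show "0 \<le> d * (Ck * (16 * q / d) powr (q / 2))" using Ck_ge1 by simp
  let ?M = "PiM {..<d} (\<lambda>_. lborel::'a measure)"
  have "(\<integral>\<^sup>+ x. ennreal (indicator (BS {..<d} 1) x * (\<Sum>i<d. norm (UU d x i) powr q)) \<partial>?M)
      = (\<integral>\<^sup>+ x. (\<Sum>i<d. indicator (BS {..<d} 1) x * ennreal ((norm (x i) / sqrt (nsq {..<d} x)) powr q)) \<partial>?M)"
  proof (intro nn_integral_cong)
    fix x :: "nat \<Rightarrow> 'a"
    have "ennreal (indicator (BS {..<d} 1) x * (\<Sum>i<d. norm (UU d x i) powr q))
        = ennreal (\<Sum>i<d. indicator (BS {..<d} 1) x * (norm (x i) / sqrt (nsq {..<d} x)) powr q)"
      by (simp add: sum_distrib_left norm_UU)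
    also have "\<dots> = (\<Sum>i<d. ennreal (indicator (BS {..<d} 1) x * (norm (x i) / sqrt (nsq {..<d} x)) powr q))"
      by (rule sum_ennreal[symmetric]) auto
    also have "\<dots> = (\<Sum>i<d. indicator (BS {..<d} 1) x * ennreal ((norm (x i) / sqrt (nsq {..<d} x)) powr q))"
      by (intro sum.cong refl) (simp add: indicator_def)
    finally show "ennreal (indicator (BS {..<d} 1) x * (\<Sum>i<d. norm (UU d x i) powr q))
      = (\<Sum>i<d. indicator (BS {..<d} 1) x * ennreal ((norm (x i) / sqrt (nsq {..<d} x)) powr q))" .
  qed
  also have "\<dots> = (\<Sum>i<d. \<integral>\<^sup>+ x. indicator (BS {..<d} 1) x * ennreal ((norm (x i) / sqrt (nsq {..<d} x)) powr q) \<partial>?M)"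
    by (intro nn_integral_sum) measurable
  also have "\<dots> \<le> (\<Sum>i<d. ennreal (Ck * (16 * q / d) powr (q / 2)) * emeasure ?M (BS {..<d} 1))"
    using moment[OF d2 _ q, where 'a='a] by (intro sum_mono) (simp add: Ck_def)
  also have "\<dots> = of_nat d * (ennreal (Ck * (16 * q / d) powr (q / 2)) * emeasure ?M (BS {..<d} 1))"
    by simp
  also have "\<dots> = ennreal (d * (Ck * (16 * q / d) powr (q / 2))) * emeasure ?M (BS {..<d} 1)"
    using Ck_ge1 by (simp add: ennreal_mult ennreal_of_nat_eq_real_of_nat mult.assoc)
  finally show "(\<integral>\<^sup>+ x. ennreal (indicator (BS {..<d} 1) x * (\<Sum>i<d. norm (UU d x i) powr q)) \<partial>?M)
      \<le> ennreal (d * (Ck * (16 * q / d) powr (q / 2))) * emeasure ?M (BS {..<d} 1)" .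
qed measurable

lemma SI_lnSq:
  assumes q: "q > 0"
  shows "sphere_integral TYPE('a) d (\<lambda>z. ln (\<Sum>i<d. norm (z i) powr q))
     \<le> ln d + ln Ck + (q / 2) * (ln (16 * q) - ln d)"
proof -
  define A where "A = d * (Ck * (16 * q / d) powr (q / 2))"
  have A: "A > 0" using Ck_ge1 q d2 by (simp add: A_def)
  have "sphere_integral TYPE('a) d (\<lambda>z. ln (\<Sum>i<d. norm (z i) powr q)) \<le> ln A"
  proof (rule SI_ln[OF d1' _ _ _ _ A])
    show "\<bar>\<Sum>i<d. norm (z i) powr q\<bar> \<le> d" if "sph d z" for z :: "nat \<Rightarrow> 'a"
      using sph_Sq_bounds[OF that q] by simp
    show "\<bar>ln (\<Sum>i<d. norm (z i) powr q)\<bar> \<le> (q / 2 + 1) * ln d" if "sph d z" for z :: "nat \<Rightarrow> 'a"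
      using sph_Sq_bounds[OF that q] by simp
    show "0 < (\<Sum>i<d. norm (z i) powr q)" if "sph d z" for z :: "nat \<Rightarrow> 'a"
      using sph_Sq_bounds[OF that q] by simp
    show "sphere_integral TYPE('a) d (\<lambda>z. \<Sum>i<d. norm (z i) powr q) \<le> A"
      using SI_Sq[OF q] by (simp add: A_def)
  qed measurable
  also have "ln A = ln d + ln Ck + (q / 2) * (ln (16 * q) - ln d)"
    using Ck_ge1 q d2 by (simp add: A_def ln_mult ln_powr ln_div)
  finally show ?thesis .
qed

lemma LB_p:
  assumes r: "r > 0"
  shows "(1/2 - 1/r) * ln d - ((1/r) * ln Ck + (1/2) * ln (16 * r))
     \<le> sphere_integral TYPE('a) d (\<lambda>z. ln (1 / pnorm d r z))"
proof -
  have "sphere_integral TYPE('a) d (\<lambda>z. ln (1 / pnorm d r z))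
      = sphere_integral TYPE('a) d (\<lambda>z. (- (1/r)) * ln (\<Sum>i<d. norm (z i) powr r) + 0)"
  proof (rule SI_cong[OF d1'])
    show "\<bar>ln (1 / pnorm d r z)\<bar> \<le> (1 / r) * ((r / 2 + 1) * ln d)" if "sph d z" for z :: "nat \<Rightarrow> 'a"
      using sph_lnp_bound[OF that r] .
    show "\<bar>(- (1/r)) * ln (\<Sum>i<d. norm (z i) powr r) + 0\<bar> \<le> (1/r) * ((r / 2 + 1) * ln d)" if "sph d z" for z :: "nat \<Rightarrow> 'a"
      using sph_Sq_bounds(3)[OF that r] r by (simp add: abs_mult divide_right_mono)
    show "ln (1 / pnorm d r z) = (- (1/r)) * ln (\<Sum>i<d. norm (z i) powr r) + 0" if "sph d z" for z :: "nat \<Rightarrow> 'a"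
      using sph_lnS[OF sph_unfold[OF that] r] by simp
  qed measurable
  also have "\<dots> = (- (1/r)) * sphere_integral TYPE('a) d (\<lambda>z. ln (\<Sum>i<d. norm (z i) powr r)) + 0"
  proof (rule SI_affine[OF d1'])
    show "\<bar>ln (\<Sum>i<d. norm (z i) powr r)\<bar> \<le> (r / 2 + 1) * ln d" if "sph d z" for z :: "nat \<Rightarrow> 'a"
      using sph_Sq_bounds(3)[OF that r] .
  qed measurable
  finally have e: "sphere_integral TYPE('a) d (\<lambda>z. ln (1 / pnorm d r z))
      = (- (1/r)) * sphere_integral TYPE('a) d (\<lambda>z. ln (\<Sum>i<d. norm (z i) powr r))" by simp
  have "(- (1/r)) * (ln d + ln Ck + (r / 2) * (ln (16 * r) - ln d))
      \<le> (- (1/r)) * sphere_integral TYPE('a) d (\<lambda>z. ln (\<Sum>i<d. norm (z i) powr r))"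
    using SI_lnSq[OF r] r by (intro mult_left_mono_neg) auto
  moreover have "(- (1/r)) * (ln d + ln Ck + (r / 2) * (ln (16 * r) - ln d))
      = (1/2 - 1/r) * ln d - ((1/r) * ln Ck + (1/2) * ln (16 * r))"
    using r by (simp add: field_simps)
  ultimately show ?thesis using e by simp
qed

lemma LB_inf:
  assumes q: "q > 0"
  shows "(- (1/q)) * (ln d + ln Ck + (q / 2) * (ln (16 * q) - ln d))
     \<le> sphere_integral TYPE('a) d (\<lambda>z. ln (1 / infnorm_d d z))"
proof -
  have "(- (1/q)) * (ln d + ln Ck + (q / 2) * (ln (16 * q) - ln d))
      \<le> (- (1/q)) * sphere_integral TYPE('a) d (\<lambda>z. ln (\<Sum>i<d. norm (z i) powr q)) + 0"
    using SI_lnSq[OF q] q by (simp add: divide_right_mono)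
  also have "\<dots> = sphere_integral TYPE('a) d (\<lambda>z. (- (1/q)) * ln (\<Sum>i<d. norm (z i) powr q) + 0)"
  proof (rule SI_affine[OF d1', symmetric])
    show "\<bar>ln (\<Sum>i<d. norm (z i) powr q)\<bar> \<le> (q / 2 + 1) * ln d" if "sph d z" for z :: "nat \<Rightarrow> 'a"
      using sph_Sq_bounds(3)[OF that q] .
  qed measurable
  also have "\<dots> \<le> sphere_integral TYPE('a) d (\<lambda>z. ln (1 / infnorm_d d z))"
  proof (rule SI_mono[OF d1'])
    show "\<bar>(- (1/q)) * ln (\<Sum>i<d. norm (z i) powr q) + 0\<bar> \<le> (1/q) * ((q / 2 + 1) * ln d)" if "sph d z" for z :: "nat \<Rightarrow> 'a"
      using sph_Sq_bounds(3)[OF that q] q by (simp add: abs_mult divide_right_mono)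
    show "\<bar>ln (1 / infnorm_d d z)\<bar> \<le> ln d" if "sph d z" for z :: "nat \<Rightarrow> 'a"
      using sph_lninf_bound[OF that] .
    show "(- (1/q)) * ln (\<Sum>i<d. norm (z i) powr q) + 0 \<le> ln (1 / infnorm_d d z)" if "sph d z" for z :: "nat \<Rightarrow> 'a"
      using sph_Cpt[OF sph_unfold[OF that] q] by simp
  qed measurable
  finally show ?thesis .
qed

end

context
  fixes TY :: "'a::euclidean_space itself"
begin

lemma SI_p_d1:
  assumes p: "p > 0"
  shows "sphere_integral TYPE('a) 1 (\<lambda>z. ln (1 / pnorm 1 p z)) = 0"
proof -
  have "sphere_integral TYPE('a) 1 (\<lambda>z. ln (1 / pnorm 1 p z)) = sphere_integral TYPE('a) 1 (\<lambda>z. 0)"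
  proof (rule SI_cong[where Cf="(1 / p) * ((p / 2 + 1) * ln 1)" and Cg=0])
    show "\<bar>ln (1 / pnorm 1 p z)\<bar> \<le> (1 / p) * ((p / 2 + 1) * ln 1)" if "sph 1 z" for z :: "nat \<Rightarrow> 'a"
      using sph_lnp_bound[OF that p] by simp
    show "ln (1 / pnorm 1 p z) = 0" if "sph 1 z" for z :: "nat \<Rightarrow> 'a"
      using sph_d1[OF sph_unfold[OF that] refl p] .
  qed auto
  then show ?thesis using SI_const[of 1 0, where 'a='a] by simp
qed

lemma SI_p_upper:
  assumes d: "d \<ge> 1" and p: "p \<ge> 2"
  shows "sphere_integral TYPE('a) d (\<lambda>z. ln (1 / pnorm d p z)) \<le> (1/2 - 1/p) * ln d"
proof -
  have "sphere_integral TYPE('a) d (\<lambda>z. ln (1 / pnorm d p z)) \<le> sphere_integral TYPE('a) d (\<lambda>z. (1/2 - 1/p) * ln d)"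
  proof (rule SI_mono[OF d, where Cf="(1 / p) * ((p / 2 + 1) * ln d)" and Cg="\<bar>(1/2 - 1/p) * ln d\<bar>"])
    show "\<bar>ln (1 / pnorm d p z)\<bar> \<le> (1 / p) * ((p / 2 + 1) * ln d)" if "sph d z" for z :: "nat \<Rightarrow> 'a"
      using sph_lnp_bound[OF that] p by simp
    show "ln (1 / pnorm d p z) \<le> (1/2 - 1/p) * ln d" if "sph d z" for z :: "nat \<Rightarrow> 'a"
      using sph_T1[OF sph_unfold[OF that] p] .
  qed auto
  then show ?thesis using SI_const[OF d, where 'a='a] by simp
qed

lemma SI_p_lower:
  assumes d: "d \<ge> 1" and p: "p > 0" "p \<le> 2"
  shows "(1/2 - 1/p) * ln d \<le> sphere_integral TYPE('a) d (\<lambda>z. ln (1 / pnorm d p z))"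
proof -
  have "sphere_integral TYPE('a) d (\<lambda>z. (1/2 - 1/p) * ln d) \<le> sphere_integral TYPE('a) d (\<lambda>z. ln (1 / pnorm d p z))"
  proof (rule SI_mono[OF d, where Cg="(1 / p) * ((p / 2 + 1) * ln d)" and Cf="\<bar>(1/2 - 1/p) * ln d\<bar>"])
    show "\<bar>ln (1 / pnorm d p z)\<bar> \<le> (1 / p) * ((p / 2 + 1) * ln d)" if "sph d z" for z :: "nat \<Rightarrow> 'a"
      using sph_lnp_bound[OF that] p by simp
    show "(1/2 - 1/p) * ln d \<le> ln (1 / pnorm d p z)" if "sph d z" for z :: "nat \<Rightarrow> 'a"
      using sph_T2[OF sph_unfold[OF that] p] .
  qed auto
  then show ?thesis using SI_const[OF d, where 'a='a] by simp
qed

lemma SI_p_small_upper: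
  assumes d: "d \<ge> 2" and p: "p > 0" "p \<le> 2"
  shows "sphere_integral TYPE('a) d (\<lambda>z. ln (1 / pnorm d p z))
     \<le> (1/2 - 1/p) * ln d + ((4 - p) / p) * ((1/(4-p)) * ln (Ck TYPE('a)) + (1/2) * ln (16 * (4 - p)))"
proof -
  define r where "r = 4 - p"
  have r: "r > 0" using p by (simp add: r_def)
  have d1: "d \<ge> 1" using d by simp
  have "sphere_integral TYPE('a) d (\<lambda>z. ln (1 / pnorm d p z))
      \<le> sphere_integral TYPE('a) d (\<lambda>z. (- (r / p)) * ln (1 / pnorm d r z) + 0)"
  proof (rule SI_mono[OF d1, where Cf="(1 / p) * ((p / 2 + 1) * ln d)" and Cg="(r/p) * ((1 / r) * ((r / 2 + 1) * ln d))"])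
    show "\<bar>ln (1 / pnorm d p z)\<bar> \<le> (1 / p) * ((p / 2 + 1) * ln d)" if "sph d z" for z :: "nat \<Rightarrow> 'a"
      using sph_lnp_bound[OF that] p by simp
    show "\<bar>(- (r / p)) * ln (1 / pnorm d r z) + 0\<bar> \<le> (r/p) * ((1 / r) * ((r / 2 + 1) * ln d))" if "sph d z" for z :: "nat \<Rightarrow> 'a"
    proof -
      have h: "\<bar>ln (1 / pnorm d r z)\<bar> \<le> (1 / r) * ((r / 2 + 1) * ln d)" using sph_lnp_bound[OF that r] .
      have "\<bar>(- (r / p)) * ln (1 / pnorm d r z) + 0\<bar> = (r / p) * \<bar>ln (1 / pnorm d r z)\<bar>"
        using p r by (simp add: abs_mult)
      also have "\<dots> \<le> (r/p) * ((1 / r) * ((r / 2 + 1) * ln d))"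
        using h p r by (intro mult_left_mono) auto
      finally show ?thesis .
    qed
    show "ln (1 / pnorm d p z) \<le> (- (r / p)) * ln (1 / pnorm d r z) + 0" if "sph d z" for z :: "nat \<Rightarrow> 'a"
      using sph_Bpt[OF sph_unfold[OF that] p] by (simp add: r_def)
  qed auto
  also have "\<dots> = (- (r / p)) * sphere_integral TYPE('a) d (\<lambda>z. ln (1 / pnorm d r z)) + 0"
  proof (rule SI_affine[OF d1])
    show "\<bar>ln (1 / pnorm d r z)\<bar> \<le> (1 / r) * ((r / 2 + 1) * ln d)" if "sph d z" for z :: "nat \<Rightarrow> 'a"
      using sph_lnp_bound[OF that r] .
  qed measurable
  also have "\<dots> \<le> (- (r / p)) * ((1/2 - 1/r) * ln d - ((1/r) * ln (Ck TYPE('a)) + (1/2) * ln (16 * r)))"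
  proof -
    have "(- (r / p)) * sphere_integral TYPE('a) d (\<lambda>z. ln (1 / pnorm d r z))
        \<le> (- (r / p)) * ((1/2 - 1/r) * ln d - ((1/r) * ln (Ck TYPE('a)) + (1/2) * ln (16 * r)))"
      by (rule mult_left_mono_neg[OF LB_p[OF d r, where 'a='a]]) (use p r in simp)
    then show ?thesis by simp
  qed
  also have "\<dots> = (1/2 - 1/p) * ln d + (r / p) * ((1/r) * ln (Ck TYPE('a)) + (1/2) * ln (16 * r))"
  proof -
    have e1: "-(r/p) * (1/2 - 1/r) = 1/2 - 1/p" using p r by (simp add: r_def field_simps)
    have "(- (r / p)) * ((1/2 - 1/r) * ln d - ((1/r) * ln (Ck TYPE('a)) + (1/2) * ln (16 * r)))
        = (-(r/p) * (1/2 - 1/r)) * ln d + (r / p) * ((1/r) * ln (Ck TYPE('a)) + (1/2) * ln (16 * r))"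
      by (simp add: algebra_simps)
    then show ?thesis by (simp only: e1)
  qed
  finally show ?thesis by (simp add: r_def)
qed

lemma SI_inf_upper:
  assumes d: "d \<ge> 1"
  shows "sphere_integral TYPE('a) d (\<lambda>z. ln (1 / infnorm_d d z)) \<le> (1/2) * ln d"
proof -
  have "sphere_integral TYPE('a) d (\<lambda>z. ln (1 / infnorm_d d z)) \<le> sphere_integral TYPE('a) d (\<lambda>z. (1/2) * ln d)"
  proof (rule SI_mono[OF d, where Cf="ln d" and Cg="\<bar>(1/2) * ln d\<bar>"])
    show "\<bar>ln (1 / infnorm_d d z)\<bar> \<le> ln d" if "sph d z" for z :: "nat \<Rightarrow> 'a"
      using sph_lninf_bound[OF that] .
    show "ln (1 / infnorm_d d z) \<le> (1/2) * ln d" if "sph d z" for z :: "nat \<Rightarrow> 'a"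
      using sph_T3[OF sph_unfold[OF that]] .
  qed auto
  then show ?thesis using SI_const[OF d, where 'a='a] by simp
qed

lemma exp_le_powr: "d \<ge> 1 \<Longrightarrow> S \<le> e * ln (real d) + c \<Longrightarrow> exp S \<le> exp c * real d powr e"
proof -
  assume d: "d \<ge> 1" and S: "S \<le> e * ln (real d) + c"
  have "exp S \<le> exp (e * ln (real d) + c)" using S by simp
  also have "\<dots> = exp c * real d powr e" using d by (simp add: powr_def exp_add)
  finally show ?thesis .
qed

lemma powr_le_exp: "d \<ge> 1 \<Longrightarrow> e * ln (real d) - c \<le> S \<Longrightarrow> real d powr e \<le> exp c * exp S"
proof -
  assume d: "d \<ge> 1" and S: "e * ln (real d) - c \<le> S"
  have "real d powr e = exp (e * ln (real d))" using d by (simp add: powr_def)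
  also have "\<dots> \<le> exp (c + S)" using S by simp
  also have "\<dots> = exp c * exp S" by (simp add: exp_add)
  finally show ?thesis .
qed

lemma main_p:
  assumes p: "p \<ge> 1"
  shows "\<exists>L>0. \<forall>d::nat. d \<ge> 1 \<longrightarrow>
         exp (sphere_integral TYPE('a) d (\<lambda>z. ln (1 / pnorm d p z))) \<le> L * real d powr (1/2 - 1/p)
       \<and> real d powr (1/2 - 1/p) \<le> L * exp (sphere_integral TYPE('a) d (\<lambda>z. ln (1 / pnorm d p z)))"
proof (cases "p \<ge> 2")
  case True
  define c where "c = (1/p) * ln (Ck TYPE('a)) + (1/2) * ln (16 * p)"
  define L where "L = exp c + 1"
  have L1: "L \<ge> 1" by (simp add: L_def add_increasing)
  show ?thesis
  proof (intro exI[of _ L] conjI allI impI)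
    show "L > 0" using L1 by simp
    fix d :: nat assume d: "d \<ge> 1"
    let ?S = "sphere_integral TYPE('a) d (\<lambda>z. ln (1 / pnorm d p z))"
    have pw: "real d powr (1/2 - 1/p) > 0" using d by simp
    have "exp ?S \<le> exp 0 * real d powr (1/2 - 1/p)"
      using SI_p_upper[OF d True] d by (intro exp_le_powr) auto
    also have "\<dots> \<le> L * real d powr (1/2 - 1/p)" using mult_right_mono[OF L1, of "real d powr (1/2 - 1/p)"] pw by simp
    finally show "exp ?S \<le> L * real d powr (1/2 - 1/p)" .
    show "real d powr (1/2 - 1/p) \<le> L * exp ?S"
    proof (cases "d = 1")
      case True
      then show ?thesis using SI_p_d1[of p] p L1 by simp
    next
      case False
      then have d2: "d \<ge> 2" using d by simp
      have "real d powr (1/2 - 1/p) \<le> exp c * exp ?S"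
        using LB_p[OF d2, of p, where 'a='a] p d by (intro powr_le_exp) (auto simp: c_def)
      also have "\<dots> \<le> L * exp ?S" by (simp add: L_def)
      finally show ?thesis .
    qed
  qed
next
  case False
  define r where "r = 4 - p"
  define c where "c = (r / p) * ((1/r) * ln (Ck TYPE('a)) + (1/2) * ln (16 * r))"
  define L where "L = exp c + 1"
  have L1: "L \<ge> 1" by (simp add: L_def add_increasing)
  have p0: "p > 0" "p \<le> 2" using p False by auto
  show ?thesis
  proof (intro exI[of _ L] conjI allI impI)
    show "L > 0" using L1 by simp
    fix d :: nat assume d: "d \<ge> 1"
    let ?S = "sphere_integral TYPE('a) d (\<lambda>z. ln (1 / pnorm d p z))"
    have pw: "real d powr (1/2 - 1/p) > 0" using d by simp
    have "real d powr (1/2 - 1/p) \<le> exp 0 * exp ?S"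
      using SI_p_lower[OF d p0] d by (intro powr_le_exp) auto
    also have "\<dots> \<le> L * exp ?S" using mult_right_mono[OF L1, of "exp ?S"] by simp
    finally show "real d powr (1/2 - 1/p) \<le> L * exp ?S" .
    show "exp ?S \<le> L * real d powr (1/2 - 1/p)"
    proof (cases "d = 1")
      case True
      then show ?thesis using SI_p_d1[of p] p L1 by simp
    next
      case False
      then have d2: "d \<ge> 2" using d by simp
      have "exp ?S \<le> exp c * real d powr (1/2 - 1/p)"
        using SI_p_small_upper[OF d2 p0] d by (intro exp_le_powr) (auto simp: c_def r_def)
      also have "\<dots> \<le> L * real d powr (1/2 - 1/p)" using pw by (simp add: L_def)
      finally show ?thesis .
    qed
  qed
qed

lemma main_inf:
  shows "\<exists>L>0. \<forall>d::nat. d \<ge> 2 \<longrightarrow>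
         sqrt (real d / ln (real d)) \<le> L * exp (sphere_integral TYPE('a) d (\<lambda>z. ln (1 / infnorm_d d z)))
       \<and> exp (sphere_integral TYPE('a) d (\<lambda>z. ln (1 / infnorm_d d z))) \<le> L * sqrt (real d)"
proof -
  define C where "C = sqrt 2 ^ DIM('a) + 1"
  have C1: "C \<ge> 1" by (simp add: C_def)
  define L where "L = 7 * exp 1 * C + 1"
  have L1: "L \<ge> 1" using C1 by (simp add: L_def)
  show ?thesis
  proof (intro exI[of _ L] conjI allI impI)
    show "L > 0" using L1 by simp
    fix d :: nat assume d: "d \<ge> 2"
    have d1: "d \<ge> 1" using d by simp
    let ?S = "sphere_integral TYPE('a) d (\<lambda>z. ln (1 / infnorm_d d z))"
    have "exp ?S \<le> exp 0 * real d powr (1/2)"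
      using SI_inf_upper[OF d1] d1 by (intro exp_le_powr) auto
    also have "\<dots> = sqrt (real d)" by (simp add: powr_half_sqrt)
    also have "\<dots> \<le> L * sqrt (real d)" using mult_right_mono[OF L1, of "sqrt (real d)"] by simp
    finally show "exp ?S \<le> L * sqrt (real d)" .
    have Ck: "Ck TYPE('a) = C" using Ck_def[OF d, where 'a='a] by (simp add: C_def)
    have l2: "ln (2::real) \<ge> 2/3" by (rule ln2_ge_two_thirds)
    have ld: "ln (real d) \<ge> ln 2" using d by simp
    have ldp: "ln (real d) > 0" using d by simp
    define q where "q = ln (real d) + 1"
    have q: "q \<ge> 1" using ldp by (simp add: q_def)
    have lC: "ln C \<ge> 0" using C1 by simp
    have LB: "(- (1/q)) * (ln d + ln C + (q / 2) * (ln (16 * q) - ln d)) \<le> ?S"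
      using LB_inf[OF d, of q, where 'a='a] q by (simp add: Ck)
    have "(ln d + ln C) / q \<le> 1 + ln C"
    proof -
      have "ln d \<le> q" by (simp add: q_def)
      then have "ln d / q \<le> 1" using q by simp
      moreover have "ln C / q \<le> ln C" using q lC by (simp add: divide_le_eq mult_le_cancel_left1 algebra_simps)
        (metis mult.commute mult_le_cancel_left1 not_le order_trans zero_le_one lC)
      ultimately show ?thesis by (simp add: add_divide_distrib)
    qed
    moreover have "(- (1/q)) * (ln d + ln C + (q / 2) * (ln (16 * q) - ln d))
        = - ((ln d + ln C) / q) + (1/2) * (ln d - ln (16 * q))"
      using q by (simp add: field_simps)
    ultimately have S: "(1/2) * (ln d - ln (16 * q)) - 1 - ln C \<le> ?S" using LB by linarith
    have "sqrt (real d / ln d) \<le> 7 * sqrt (real d / (16 * q))"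
    proof -
      have "16 * q \<le> 49 * ln d" using ld l2 by (simp add: q_def)
      then have "real d / ln d \<le> 49 * (real d / (16 * q))"
        using ldp q d by (simp add: field_simps)
      then have "sqrt (real d / ln d) \<le> sqrt (49 * (real d / (16 * q)))" by simp
      also have "\<dots> = 7 * sqrt (real d / (16 * q))"
      proof -
        have s49: "sqrt (49::real) = 7" by (rule real_sqrt_unique) auto
        show ?thesis by (simp only: real_sqrt_mult s49)
      qed
      finally show ?thesis .
    qed
    also have "sqrt (real d / (16 * q)) = exp ((1/2) * (ln d - ln (16 * q)))"
    proof -
      have "sqrt (real d / (16 * q)) = (real d / (16 * q)) powr (1/2)"
        using q by (simp add: powr_half_sqrt)
      also have "\<dots> = exp ((1/2) * ln (real d / (16 * q)))" using q d by (simp add: powr_def)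
      also have "ln (real d / (16 * q)) = ln d - ln (16 * q)" using q d by (simp add: ln_div)
      finally show ?thesis .
    qed
    also have "exp ((1/2) * (ln d - ln (16 * q))) \<le> exp (?S + 1 + ln C)"
      using S by (simp only: exp_le_cancel_iff)
    also have "\<dots> = exp 1 * C * exp ?S" using C1 by (simp add: exp_add)
    finally have "sqrt (real d / ln d) \<le> 7 * (exp 1 * C) * exp ?S" by simp
    also have "\<dots> \<le> L * exp ?S" by (simp add: L_def)
    finally show "sqrt (real d / ln (real d)) \<le> L * exp ?S" .
  qed
qed

end

theorem lemma2p3:
  shows
   "(\<forall>p::real. 1 \<le> p \<longrightarrow>
      (\<exists>L>0. \<forall>d::nat. d \<ge> 1 \<longrightarrow>
         exp (sphere_integral TYPE(real) d (\<lambda>z. ln (1 / pnorm d p z))) \<le> L * real d powr (1/2 - 1/p)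
       \<and> real d powr (1/2 - 1/p) \<le> L * exp (sphere_integral TYPE(real) d (\<lambda>z. ln (1 / pnorm d p z)))))
  \<and> (\<forall>p::real. 1 \<le> p \<longrightarrow>
      (\<exists>L>0. \<forall>d::nat. d \<ge> 1 \<longrightarrow>
         exp (sphere_integral TYPE(complex) d (\<lambda>z. ln (1 / pnorm d p z))) \<le> L * real d powr (1/2 - 1/p)
       \<and> real d powr (1/2 - 1/p) \<le> L * exp (sphere_integral TYPE(complex) d (\<lambda>z. ln (1 / pnorm d p z)))))
  \<and> (\<exists>L>0. \<forall>d::nat. d \<ge> 2 \<longrightarrow>
         sqrt (real d / ln (real d)) \<le> L * exp (sphere_integral TYPE(real) d (\<lambda>z. ln (1 / infnorm_d d z)))
       \<and> exp (sphere_integral TYPE(real) d (\<lambda>z. ln (1 / infnorm_d d z))) \<le> L * sqrt (real d))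
  \<and> (\<exists>L>0. \<forall>d::nat. d \<ge> 2 \<longrightarrow>
         sqrt (real d / ln (real d)) \<le> L * exp (sphere_integral TYPE(complex) d (\<lambda>z. ln (1 / infnorm_d d z)))
       \<and> exp (sphere_integral TYPE(complex) d (\<lambda>z. ln (1 / infnorm_d d z))) \<le> L * sqrt (real d))"
proof -
  show ?thesis
    using main_p[where 'a=real] main_p[where 'a=complex] main_inf[where 'a=real] main_inf[where 'a=complex]
    by blast
qed

end
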